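(* For each integer $m\ge0$, both $\{G_j(x)^{q^m}\}_{j\ge0}$ and $\{D_j(x)^{q^m}\}_{j\ge0}$ are orthonormal bases of $C(O,K)$.
   Context: Let $q$ be a prime power, $K=\mathbf{F}_q((T))$, $O=\mathbf{F}_q[[T]]$ with $T$-adic absolute value. $C(O,K)$ is the $K$-Banach space of continuous functions $O\to K$ with sup-norm; a sequence $(f_n)$ is an orthonormal basis if every $f$ can be written uniquely as $f=\sum a_nf_n$ with $a_n\in K$, $a_n\to0$, and then $\|f\|=\max|a_n|$. For $n\ge1$: $[n]=T^{q^n}-T$, $F_0=1$, $F_n=[n][n-1]^q\cdots[1]^{q^{n-1}}$, $e_n(x)=\prod_{m\in\mathbf{F}_q[T],\deg m<n}(x-m)$; $E_0(x)=x$, $E_n=e_n/F_n$. Hasse derivatives: $\mathcal{D}_n(\sum_ia_iT^i)=\sum_i\binom{i}{n}a_iT^{i-n}$ (binomials in $\mathbf{F}_q$). For $j\ge0$ with base-$q$ expansion $j=\alpha_0+\cdots+\alpha_sq^s$ ($0\le\alpha_i<q$): $G_j=\prod_{n=0}^sE_n^{\alpha_n}$, $D_j=\prod_{n=0}^s\mathcal{D}_n^{\alpha_n}$ ($G_0=D_0=1$). *)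

theory Defs
  imports "HOL-Analysis.Analysis" "HOL-Computational_Algebra.Formal_Laurent_Series"
begin

text \<open>Setting: 'a is a finite field F_q (q = CARD('a), automatically a prime power),
  K = 'a fls = F_q((T)) with the library's T-adic metric
  dist a b = 2^(-v(a-b)), O = F_q[[T]] = {x. v(x) >= 0}.\<close>

definition tabs :: "'a::{finite,field} fls \<Rightarrow> real" where
  "tabs x = dist x 0"

definition Oring :: "'a::{finite,field} fls set" where
  "Oring = {x. 0 \<le> fls_subdegree x}"

definition CO :: "('a::{finite,field} fls \<Rightarrow> 'a fls) \<Rightarrow> bool" where
  "CO f \<longleftrightarrow> continuous_on Oring f"

definition supnorm :: "('a::{finite,field} fls \<Rightarrow> 'a fls) \<Rightarrow> real" where
  "supnorm f = (SUP x\<in>Oring. tabs (f x))"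

definition orthonormal_basis :: "(nat \<Rightarrow> 'a::{finite,field} fls \<Rightarrow> 'a fls) \<Rightarrow> bool" where
  "orthonormal_basis g \<longleftrightarrow>
     (\<forall>n. CO (g n)) \<and>
     (\<forall>f. CO f \<longrightarrow>
        (\<exists>!a::nat \<Rightarrow> 'a fls. (\<lambda>n. tabs (a n)) \<longlonglongrightarrow> 0 \<and>
              (\<lambda>N. supnorm (\<lambda>x. f x - (\<Sum>n<N. a n * g n x))) \<longlonglongrightarrow> 0) \<and>
        (\<forall>a::nat \<Rightarrow> 'a fls. (\<lambda>n. tabs (a n)) \<longlonglongrightarrow> 0 \<and>
              (\<lambda>N. supnorm (\<lambda>x. f x - (\<Sum>n<N. a n * g n x))) \<longlonglongrightarrow> 0
           \<longrightarrow> supnorm f = (SUP n. tabs (a n))))"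

definition brk :: "nat \<Rightarrow> 'a::{finite,field} fls" where
  "brk n = fls_X ^ (CARD('a) ^ n) - fls_X"

definition Fcar :: "nat \<Rightarrow> 'a::{finite,field} fls" where
  "Fcar n = (\<Prod>i\<in>{1..n}. brk i ^ (CARD('a) ^ (n - i)))"

definition polys_lt :: "nat \<Rightarrow> 'a::{finite,field} fls set" where
  "polys_lt n = {p. \<forall>i. fls_nth p i \<noteq> 0 \<longrightarrow> 0 \<le> i \<and> i < int n}"

definition ecar :: "nat \<Rightarrow> 'a::{finite,field} fls \<Rightarrow> 'a fls" where
  "ecar n x = (\<Prod>m\<in>polys_lt n. x - m)"

definition Ecar :: "nat \<Rightarrow> 'a::{finite,field} fls \<Rightarrow> 'a fls" where
  "Ecar n x = (if n = 0 then x else ecar n x / Fcar n)"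

text \<open>Hasse derivative: D_n(sum a_i T^i) = sum_i binom(i,n) a_i T^(i-n), for x in O.\<close>
definition hasse :: "nat \<Rightarrow> 'a::{finite,field} fls \<Rightarrow> 'a fls" where
  "hasse n x = fps_to_fls (Abs_fps (\<lambda>k. of_nat ((k + n) choose n) * fls_nth x (int (k + n))))"

definition digit :: "nat \<Rightarrow> nat \<Rightarrow> nat \<Rightarrow> nat" where
  "digit q j n = (j div q ^ n) mod q"

definition Gfun :: "nat \<Rightarrow> 'a::{finite,field} fls \<Rightarrow> 'a fls" where
  "Gfun j x = (\<Prod>n\<le>j. Ecar n x ^ digit CARD('a) j n)"

definition Dfun :: "nat \<Rightarrow> 'a::{finite,field} fls \<Rightarrow> 'a fls" where
  "Dfun j x = (\<Prod>n\<le>j. hasse n x ^ digit CARD('a) j n)"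

end

theory Submission
  imports Defs
begin

unbundle fps_syntax



definition vge :: "int \<Rightarrow> 'a::zero fls \<Rightarrow> bool" where
  "vge t z \<longleftrightarrow> (\<forall>i<t. z $$ i = 0)"

lemma vge_zero[simp]: "vge t 0" by (simp add: vge_def)
lemma vge_add: "vge t a \<Longrightarrow> vge t b \<Longrightarrow> vge t (a + (b::'a::monoid_add fls))" by (simp add: vge_def)
lemma vge_diff: "vge t a \<Longrightarrow> vge t b \<Longrightarrow> vge t (a - (b::'a::group_add fls))" by (simp add: vge_def)
lemma vge_uminus: "vge t a \<Longrightarrow> vge t (- (a::'a::group_add fls))" by (simp add: vge_def)
lemma vge_sum: "(\<And>i. i \<in> A \<Longrightarrow> vge t (f i)) \<Longrightarrow> vge t (\<Sum>i\<in>A. (f i :: 'a::comm_monoid_add fls))"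
  by (simp add: vge_def fls_nth_sum)
lemma vge_mono: "vge t a \<Longrightarrow> s \<le> t \<Longrightarrow> vge s a" by (simp add: vge_def)
lemma vge_iff: "(z::'a::zero fls) \<noteq> 0 \<Longrightarrow> vge t z \<longleftrightarrow> t \<le> fls_subdegree z"
proof
  assume z: "z \<noteq> 0" and "vge t z"
  show "t \<le> fls_subdegree z"
  proof (rule ccontr)
    assume "\<not> t \<le> fls_subdegree z"
    then have "z $$ fls_subdegree z = 0" using \<open>vge t z\<close> by (simp add: vge_def)
    then show False using z by simp
  qed
next
  assume "t \<le> fls_subdegree z"
  then show "vge t z" by (simp add: vge_def)
qed
lemma vge_subdeg: "vge (fls_subdegree z) z"
  by (simp add: vge_def)
lemma vge_mult: "vge s a \<Longrightarrow> vge t b \<Longrightarrow> vge (s + t) (a * (b::'a::{comm_monoid_add,mult_zero} fls))"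
proof -
  assume a: "vge s a" and b: "vge t b"
  show ?thesis
  proof (cases "a = 0 \<or> b = 0")
    case True then show ?thesis by auto
  next
    case False
    then have "s \<le> fls_subdegree a" "t \<le> fls_subdegree b" using a b vge_iff by auto
    then show ?thesis unfolding vge_def using fls_times_nth_eq0 by force
  qed
qed
lemma Oring_vge: "x \<in> Oring \<longleftrightarrow> vge 0 x"
  unfolding Oring_def by (cases "x = 0") (auto simp: vge_iff)

lemma mult_nth_vge: 
  assumes "vge s a" "vge 0 (b::'a::comm_ring_1 fls)"
  shows "(a*b) $$ s = a $$ s * b $$ 0"
proof (cases "a = 0 \<or> b = 0")
  case True then show ?thesis by auto
next
  case False
  then have sa: "s \<le> fls_subdegree a" and sb: "0 \<le> fls_subdegree b" using assms vge_iff by auto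
  show ?thesis
  proof (cases "s < fls_subdegree a")
    case True
    then show ?thesis using sb fls_times_nth_eq0[of s a b] by simp
  next
    case False
    then have "s = fls_subdegree a" using sa by simp
    then show ?thesis
    proof (cases "0 < fls_subdegree b")
      case True then show ?thesis using fls_times_nth_eq0[of s a b] \<open>s = _\<close> by simp
    next
      case False then have "fls_subdegree b = 0" using sb by simp
      then show ?thesis using fls_times_base[of a b] \<open>s = _\<close> by simp
    qed
  qed
qed

lemma tabs_def2: "tabs (z::'a::{finite,field} fls) = (if z = 0 then 0 else 2 powr (- real_of_int (fls_subdegree z)))"
  unfolding tabs_def dist_fls_def
  by (auto simp: powr_realpow[symmetric] powr_minus)

lemma dist_tabs: "dist a b = tabs (a - (b::'a::{finite,field} fls))"
  unfolding tabs_def dist_fls_def by simp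

lemma tabs_nonneg: "0 \<le> tabs z" by (simp add: tabs_def)

lemma vge_tabs: "vge t (z::'a::{finite,field} fls) \<longleftrightarrow> tabs z \<le> 2 powr (- real_of_int t)"
  by (cases "z = 0") (auto simp: tabs_def2 vge_iff)


lemma card_ge2: "2 \<le> CARD('a::{finite,field})"
proof -
  have "(0::'a) \<noteq> 1" by simp
  then have "card {0::'a, 1} = 2" by simp
  moreover have "card {0::'a, 1} \<le> CARD('a)" by (rule card_mono) auto
  ultimately show ?thesis by simp
qed

lemma fermat_nz:
  fixes x :: "'a::{finite,field}"
  assumes "x \<noteq> 0"
  shows "x ^ (CARD('a) - 1) = 1"
proof -
  let ?S = "UNIV - {0::'a}"
  have bij: "bij_betw (\<lambda>y. x * y) ?S ?S"
    by (rule bij_betwI[where g="\<lambda>y. y / x"]) (use assms in auto)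
  have "(\<Prod>y\<in>?S. x * y) = (\<Prod>y\<in>?S. y)"
    using prod.reindex_bij_betw[OF bij, of "\<lambda>y. y"] by simp
  moreover have "(\<Prod>y\<in>?S. x * y) = x ^ card ?S * (\<Prod>y\<in>?S. y)"
    by (simp add: prod.distrib)
  moreover have "card ?S = CARD('a) - 1" by (simp add: card_Diff_singleton)
  moreover have "(\<Prod>y\<in>?S. y) \<noteq> 0" by simp
  ultimately show ?thesis by (metis mult_cancel_right1)
qed

lemma fermat: "(x::'a::{finite,field}) ^ CARD('a) = x"
proof (cases "x = 0")
  case True then show ?thesis using card_ge2[where 'a='a] by (simp add: power_0_left)
next
  case False
  have "CARD('a) = Suc (CARD('a) - 1)" using card_ge2[where 'a='a] by simp
  then have "x ^ CARD('a) = x * x ^ (CARD('a) - 1)" by (metis power_Suc)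
  then show ?thesis using fermat_nz[OF False] by simp
qed

lemma fermat_pow: "(x::'a::{finite,field}) ^ (CARD('a) ^ m) = x"
proof (induction m)
  case 0 then show ?case by simp
next
  case (Suc m)
  have "x ^ (CARD('a) ^ Suc m) = (x ^ (CARD('a) ^ m)) ^ CARD('a)"
    by (simp add: power_mult[symmetric] mult.commute)
  then show ?case using Suc fermat by simp
qed


definition monoK :: "nat \<Rightarrow> nat \<Rightarrow> (nat \<Rightarrow> 'a::{finite,field}) \<Rightarrow> 'a" where
  "monoK k j d = (\<Prod>n<k. d n ^ digit CARD('a) j n)"

definition Vk :: "nat \<Rightarrow> (nat \<Rightarrow> 'a::{finite,field}) set" where
  "Vk k = PiE {..<k} (\<lambda>_. UNIV)"

lemma digit_low:
  assumes "j < q ^ k" "n < k" "0 < q"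
  shows "digit q (j + i * q ^ k) n = digit q j n"
proof -
  have qk: "i * q ^ k = (q * (i * q ^ (k - n - 1))) * q ^ n"
  proof -
    have "k = (k - n - 1) + 1 + n" using assms(2) by simp
    then have "q ^ k = q ^ (k - n - 1) * q * q ^ n" by (metis power_add power_one_right)
    then show ?thesis by simp
  qed
  have "q ^ n \<noteq> 0" using assms(3) by simp
  then have "(j + i * q ^ k) div q ^ n = q * (i * q ^ (k - n - 1)) + j div q ^ n"
    unfolding qk by simp
  then show ?thesis unfolding digit_def by simp
qed

lemma digit_top:
  assumes "j < q ^ k" "i < q"
  shows "digit q (j + i * q ^ k) k = i"
proof -
  have "0 < q ^ k" using assms(2) by simp
  then have "(j + i * q ^ k) div q ^ k = i" using assms(1) by simp
  then show ?thesis unfolding digit_def using assms(2) by simp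
qed

lemma digit_high:
  assumes "j < q ^ k" "k \<le> n"
  shows "digit q j n = 0"
proof (cases "q = 0")
  case True
  then show ?thesis using assms by (cases k; cases n) (auto simp: digit_def)
next
  case False
  then have "q ^ k \<le> q ^ n" using assms(2) by (simp add: power_increasing)
  then have "j div q ^ n = 0" using assms(1) by simp
  then show ?thesis by (simp add: digit_def)
qed

lemma monoK_Suc:
  assumes "j < CARD('a) ^ k" "i < CARD('a)"
  shows "monoK (Suc k) (j + i * CARD('a) ^ k) (d :: nat \<Rightarrow> 'a::{finite,field}) = monoK k j d * d k ^ i"
proof -
  have q0: "0 < CARD('a)" by simp
  have "monoK (Suc k) (j + i * CARD('a) ^ k) d =
        (\<Prod>n<k. d n ^ digit CARD('a) (j + i * CARD('a) ^ k) n) * d k ^ digit CARD('a) (j + i * CARD('a) ^ k) k"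
    unfolding monoK_def by simp
  also have "\<dots> = monoK k j d * d k ^ i"
    unfolding monoK_def using digit_low[OF assms(1) _ q0] digit_top[OF assms] by simp
  finally show ?thesis .
qed

lemma span1:
  fixes \<psi> :: "'a::{finite,field} \<Rightarrow> 'a"
  shows "\<exists>b. \<forall>t. \<psi> t = (\<Sum>i<CARD('a). b i * t ^ i)"
proof -
  let ?q = "CARD('a)"
  have ind: "(1 - (t - e) ^ (?q - 1)) = (if t = e then 1 else 0)" for t e :: 'a
    using fermat_nz[of "t - e"] card_ge2[where 'a='a] by (auto simp: power_0_left)
  have exp: "(t - e) ^ (?q - 1) = (\<Sum>i<?q. of_nat ((?q - 1) choose i) * t ^ i * (- e) ^ (?q - 1 - i))"
    for t e :: 'a
  proof -
    have "{..?q - 1} = {..<?q}" using card_ge2[where 'a='a] by auto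
    then show ?thesis using binomial_ring[of t "-e" "?q - 1"] by simp
  qed
  define b where "b i = (\<Sum>e\<in>UNIV. \<psi> e * ((if i = 0 then 1 else 0) -
                   of_nat ((?q - 1) choose i) * (- e) ^ (?q - 1 - i)))" for i
  have "\<psi> t = (\<Sum>i<?q. b i * t ^ i)" for t
  proof -
    have "\<psi> t = (\<Sum>e\<in>UNIV. if t = e then \<psi> e else 0)"
      by simp
    also have "\<dots> = (\<Sum>e\<in>UNIV. \<psi> e * (if t = e then 1 else 0))"
      by (rule sum.cong) auto
    also have "\<dots> = (\<Sum>e\<in>UNIV. \<psi> e * (1 - (t - e) ^ (?q - 1)))"
      using ind by simp
    also have "\<dots> = (\<Sum>e\<in>UNIV. \<Sum>i<?q. \<psi> e * ((if i = 0 then 1 else 0) -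
                   of_nat ((?q - 1) choose i) * (- e) ^ (?q - 1 - i)) * t ^ i)"
    proof (rule sum.cong[OF refl])
      fix e
      have z: "0 < ?q" by simp
      have "(\<Sum>i<?q. (if i = 0 then 1 else 0) * t ^ i) = (\<Sum>i<?q. if i = 0 then (1::'a) else 0)"
        by (rule sum.cong) auto
      also have "\<dots> = 1" using z by simp
      finally have "(1::'a) = (\<Sum>i<?q. (if i = 0 then 1 else 0) * t ^ i)" by simp
      then have "\<psi> e * (1 - (t - e) ^ (?q - 1)) = \<psi> e * ((\<Sum>i<?q. (if i = 0 then 1 else 0) * t ^ i) -
          (\<Sum>i<?q. of_nat ((?q - 1) choose i) * t ^ i * (- e) ^ (?q - 1 - i)))"
        using exp by simp
      also have "\<dots> = (\<Sum>i<?q. \<psi> e * ((if i = 0 then 1 else 0) -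
                   of_nat ((?q - 1) choose i) * (- e) ^ (?q - 1 - i)) * t ^ i)"
        by (simp add: sum_subtractf[symmetric] sum_distrib_left algebra_simps)
      finally show "\<psi> e * (1 - (t - e) ^ (?q - 1)) = \<dots>" .
    qed
    also have "\<dots> = (\<Sum>i<?q. b i * t ^ i)"
      unfolding b_def by (subst sum.swap) (simp add: sum_distrib_right)
    finally show ?thesis .
  qed
  then show ?thesis by blast
qed


lemma monoK_cong: "(\<And>n. n < k \<Longrightarrow> d n = d' n) \<Longrightarrow> monoK k j d = monoK k j d'"
  unfolding monoK_def by (rule prod.cong) auto

lemma spanK:
  fixes \<phi> :: "(nat \<Rightarrow> 'a::{finite,field}) \<Rightarrow> 'a"
  shows "\<exists>c. \<forall>d\<in>Vk k. \<phi> d = (\<Sum>j<CARD('a)^k. c j * monoK k j d)"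
proof (induction k arbitrary: \<phi>)
  case 0
  have V0: "Vk 0 = {\<lambda>_. undefined}" unfolding Vk_def by simp
  show ?case by (intro exI[of _ "\<lambda>_. \<phi> (\<lambda>_. undefined)"]) (simp add: monoK_def V0)
next
  case (Suc k)
  let ?q = "CARD('a)"
  have "\<forall>e. \<exists>c. \<forall>d\<in>Vk k. \<phi> (d(k:=e)) = (\<Sum>j<?q^k. c j * monoK k j d)"
  proof
    fix e show "\<exists>c. \<forall>d\<in>Vk k. \<phi> (d(k:=e)) = (\<Sum>j<?q^k. c j * monoK k j d)"
      using Suc.IH[of "\<lambda>d. \<phi> (d(k:=e))"] .
  qed
  then have "\<exists>C. \<forall>e. \<forall>d\<in>Vk k. \<phi> (d(k:=e)) = (\<Sum>j<?q^k. C e j * monoK k j d)"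
    by (rule choice)
  then obtain C where C: "\<And>e d. d \<in> Vk k \<Longrightarrow> \<phi> (d(k:=e)) = (\<Sum>j<?q^k. C e j * monoK k j d)"
    by blast
  have "\<forall>j. \<exists>b. \<forall>t. C t j = (\<Sum>i<?q. b i * t ^ i)"
    by (rule allI, rule span1)
  then have "\<exists>B. \<forall>j t. C t j = (\<Sum>i<?q. B j i * t ^ i)" by (rule choice)
  then obtain B where B: "\<And>j t. C t j = (\<Sum>i<?q. B j i * t ^ i)" by blast
  define c' where "c' j' = B (j' mod ?q^k) (j' div ?q^k)" for j'
  have "\<phi> d = (\<Sum>j<?q^Suc k. c' j * monoK (Suc k) j d)" if d: "d \<in> Vk (Suc k)" for d
  proof -
    define d' where "d' = d(k := undefined)"
    have d'V: "d' \<in> Vk k" using d unfolding d'_def Vk_def PiE_def extensional_def by auto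
    have dd: "d'(k := d k) = d" unfolding d'_def by simp
    have mono_eq: "monoK k j d' = monoK k j d" for j
      by (rule monoK_cong) (simp add: d'_def)
    have "\<phi> d = (\<Sum>j<?q^k. C (d k) j * monoK k j d)"
      using C[OF d'V, of "d k"] unfolding dd mono_eq .
    also have "\<dots> = (\<Sum>j<?q^k. \<Sum>i<?q. B j i * monoK (Suc k) (j + i * ?q^k) d)"
    proof (rule sum.cong[OF refl])
      fix j assume j: "j \<in> {..<?q^k}"
      have "C (d k) j * monoK k j d = (\<Sum>i<?q. B j i * (monoK k j d * d k ^ i))"
        unfolding B by (simp add: sum_distrib_left sum_distrib_right mult_ac)
      also have "\<dots> = (\<Sum>i<?q. B j i * monoK (Suc k) (j + i * ?q^k) d)"
        using j by (intro sum.cong refl) (simp add: monoK_Suc)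
      finally show "C (d k) j * monoK k j d = \<dots>" .
    qed
    also have "\<dots> = (\<Sum>i<?q. \<Sum>j<?q^k. c' (j + i * ?q^k) * monoK (Suc k) (j + i * ?q^k) d)"
      by (subst sum.swap) (intro sum.cong refl, simp add: c'_def)
    also have "\<dots> = (\<Sum>j<?q * ?q^k. c' j * monoK (Suc k) j d)"
      by (rule sum_mult_product[symmetric])
    finally show ?thesis by simp
  qed
  then show ?case by blast
qed

lemma card_Vk: "card (Vk k :: (nat \<Rightarrow> 'a::{finite,field}) set) = CARD('a) ^ k"
  unfolding Vk_def by (simp add: card_PiE)

lemma finite_Vk: "finite (Vk k :: (nat \<Rightarrow> 'a::{finite,field}) set)"
  unfolding Vk_def by (simp add: finite_PiE)

lemma indepK:
  fixes c :: "nat \<Rightarrow> 'a::{finite,field}"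
  assumes "\<forall>d\<in>Vk k. (\<Sum>j<CARD('a)^k. c j * monoK k j d) = 0"
  shows "\<forall>j<CARD('a)^k. c j = 0"
proof -
  let ?q = "CARD('a)"
  let ?A = "PiE {..<?q^k} (\<lambda>_. UNIV :: 'a set)"
  let ?B = "PiE (Vk k :: (nat \<Rightarrow> 'a) set) (\<lambda>_. UNIV :: 'a set)"
  define L where "L c = restrict (\<lambda>d. \<Sum>j<?q^k. c j * monoK k j d) (Vk k)" for c :: "nat \<Rightarrow> 'a"
  have img: "L ` ?A = ?B"
  proof
    show "L ` ?A \<subseteq> ?B" unfolding L_def by auto
    show "?B \<subseteq> L ` ?A"
    proof
      fix \<phi> assume \<phi>: "\<phi> \<in> ?B"
      obtain c0 where c0: "\<forall>d\<in>Vk k. \<phi> d = (\<Sum>j<?q^k. c0 j * monoK k j d)"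
        using spanK by blast
      have "L (restrict c0 {..<?q^k}) = \<phi>"
      proof
        fix d show "L (restrict c0 {..<?q^k}) d = \<phi> d"
          using \<phi> c0 unfolding L_def PiE_def extensional_def by auto
      qed
      moreover have "restrict c0 {..<?q^k} \<in> ?A" by simp
      ultimately show "\<phi> \<in> L ` ?A" by blast
    qed
  qed
  have cA: "card ?A = ?q ^ (?q ^ k)" by (simp add: card_PiE)
  have cB: "card ?B = ?q ^ (?q ^ k)" by (simp add: card_PiE finite_Vk card_Vk)
  have inj: "inj_on L ?A"
    by (rule eq_card_imp_inj_on) (simp_all add: finite_PiE img cA cB)
  have "L (restrict c {..<?q^k}) = L (restrict (\<lambda>_. 0) {..<?q^k})"
  proof
    fix d show "L (restrict c {..<?q^k}) d = L (restrict (\<lambda>_. 0) {..<?q^k}) d"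
      using assms unfolding L_def by auto
  qed
  then have "restrict c {..<?q^k} = restrict (\<lambda>_. 0) {..<?q^k}"
    by (rule inj_onD[OF inj]) auto
  then show ?thesis by (metis lessThan_iff restrict_apply')
qed


lemma tabs_zero[simp]: "tabs (0::'a::{finite,field} fls) = 0" by (simp add: tabs_def)
lemma tabs_eq0: "tabs (z::'a::{finite,field} fls) = 0 \<longleftrightarrow> z = 0" by (simp add: tabs_def)

lemma tabs_mult: "tabs (a * b) = tabs a * tabs (b::'a::{finite,field} fls)"
proof (cases "a = 0 \<or> b = 0")
  case True then show ?thesis by auto
next
  case False
  then show ?thesis by (simp add: tabs_def2 powr_add[symmetric] algebra_simps)
qed

lemma tabs_uminus: "tabs (- a) = tabs (a::'a::{finite,field} fls)"
  by (simp add: tabs_def2 fls_subdegree_minus)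

lemma tabs_add: "tabs (a + b) \<le> max (tabs a) (tabs (b::'a::{finite,field} fls))"
proof (cases "a = 0 \<or> b = 0")
  case True then show ?thesis by (auto simp: tabs_nonneg)
next
  case False
  then have a: "a \<noteq> 0" and b: "b \<noteq> 0" by auto
  show ?thesis
  proof (cases "fls_subdegree a \<le> fls_subdegree b")
    case True
    have "vge (fls_subdegree a) b" using vge_mono[OF vge_subdeg[of b], of "fls_subdegree a"] True by simp
    then have "vge (fls_subdegree a) (a + b)" by (intro vge_add vge_subdeg)
    then have "tabs (a + b) \<le> tabs a" using a by (simp add: vge_tabs tabs_def2)
    then show ?thesis by simp
  next
    case False
    have "vge (fls_subdegree b) a" using vge_mono[OF vge_subdeg[of a], of "fls_subdegree b"] False by simp
    then have "vge (fls_subdegree b) (a + b)" by (intro vge_add vge_subdeg)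
    then have "tabs (a + b) \<le> tabs b" using b by (simp add: vge_tabs tabs_def2)
    then show ?thesis by simp
  qed
qed

lemma tabs_diff: "tabs (a - b) \<le> max (tabs a) (tabs (b::'a::{finite,field} fls))"
  using tabs_add[of a "-b"] by (simp add: tabs_uminus)

lemma tabs_add_le: "tabs (a + b) \<le> tabs a + tabs (b::'a::{finite,field} fls)"
  using tabs_add[of a b] tabs_nonneg[of a] tabs_nonneg[of b] by linarith

lemma tabs_sum_le:
  assumes "\<And>i. i \<in> A \<Longrightarrow> tabs (f i) \<le> B" "0 \<le> B"
  shows "tabs (\<Sum>i\<in>A. (f i :: 'a::{finite,field} fls)) \<le> B"
  using assms
proof (induction A rule: infinite_finite_induct)
  case (insert x F)
  have "tabs (f x + sum f F) \<le> max (tabs (f x)) (tabs (sum f F))" by (rule tabs_add)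
  also have "\<dots> \<le> B" using insert by auto
  finally show ?case using insert by simp
qed auto

lemma tabs_less_vge: "tabs z < 2 powr (- real_of_int t) \<Longrightarrow> vge (t + 1) (z::'a::{finite,field} fls)"
  by (cases "z = 0") (auto simp: tabs_def2 vge_iff)

lemma vge_tabs_less: "vge (t + 1) z \<Longrightarrow> tabs (z::'a::{finite,field} fls) < 2 powr (- real_of_int t)"
proof -
  assume "vge (t + 1) z"
  then have "tabs z \<le> 2 powr (- real_of_int (t + 1))" by (simp add: vge_tabs)
  also have "\<dots> < 2 powr (- real_of_int t)" by simp
  finally show ?thesis .
qed

lemma small_pow: "0 < (e::real) \<Longrightarrow> \<exists>K::nat. 2 powr (- real K) < e"
proof -
  assume e: "0 < e"
  obtain K where "1 / e < 2 ^ K" using real_arch_pow[of 2 "1/e"] by auto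
  then have "1 / e < 2 powr real K" by (simp add: powr_realpow)
  then have "2 powr (- real K) < e" using e
    by (simp add: powr_minus field_simps)
  then show ?thesis by blast
qed

lemma tabs_le1: "x \<in> Oring \<Longrightarrow> tabs x \<le> 1"
  using vge_tabs[of 0 x] by (simp add: Oring_vge)

definition digvec :: "nat \<Rightarrow> 'a::{finite,field} fls \<Rightarrow> (nat \<Rightarrow> 'a)" where
  "digvec k x = restrict (\<lambda>i. x $$ int i) {..<k}"

definition embd :: "nat \<Rightarrow> (nat \<Rightarrow> 'a::{finite,field}) \<Rightarrow> 'a fls" where
  "embd k d = fps_to_fls (Abs_fps (\<lambda>i. if i < k then d i else 0))"

lemma digvec_Vk: "digvec k x \<in> Vk k" by (simp add: digvec_def Vk_def)

lemma embed_Oring: "embd k d \<in> Oring"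
  by (simp add: embd_def Oring_def fls_subdegree_fls_to_fps_gt0)

lemma digvec_embed: "d \<in> Vk k \<Longrightarrow> digvec k (embd k d) = d"
  unfolding digvec_def embd_def Vk_def by (auto simp: PiE_def extensional_def)

lemma embed_close: "x \<in> Oring \<Longrightarrow> vge (int k) (x - embd k (digvec k x))"
  unfolding vge_def embd_def digvec_def Oring_vge
  by (auto simp: vge_def)

lemma zero_Oring[simp]: "0 \<in> Oring" by (simp add: Oring_def)

lemma Oring_add: "x \<in> Oring \<Longrightarrow> y \<in> Oring \<Longrightarrow> x + y \<in> Oring"
  by (simp add: Oring_vge vge_add)
lemma Oring_diff: "x \<in> Oring \<Longrightarrow> y \<in> Oring \<Longrightarrow> x - y \<in> Oring"
  by (simp add: Oring_vge vge_diff)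
lemma Oring_mult: "x \<in> Oring \<Longrightarrow> y \<in> Oring \<Longrightarrow> x * y \<in> Oring"
  using vge_mult[of 0 x 0 y] by (simp add: Oring_vge)


lemma finite_embed_img: "finite (embd k ` (Vk k :: (nat \<Rightarrow> 'a::{finite,field}) set))"
  by (simp add: finite_Vk)

lemma Oring_totally_bounded:
  "\<forall>e>0. \<exists>K. finite K \<and> (Oring :: 'a::{finite,field} fls set) \<subseteq> (\<Union>x\<in>K. ball x e)"
proof (intro allI impI)
  fix e :: real assume "0 < e"
  then obtain k :: nat where k: "2 powr (- real k) < e" using small_pow by blast
  have "(Oring :: 'a fls set) \<subseteq> (\<Union>x\<in>embd k ` Vk k. ball x e)"
  proof
    fix x :: "'a fls" assume x: "x \<in> Oring"
    have "tabs (x - embd k (digvec k x)) \<le> 2 powr (- real k)"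
      using embed_close[OF x, of k] by (simp add: vge_tabs)
    then have "dist (embd k (digvec k x)) x < e"
      using k by (simp add: dist_commute dist_tabs)
    then show "x \<in> (\<Union>x\<in>embd k ` Vk k. ball x e)"
      using digvec_Vk[of k x] by auto
  qed
  then show "\<exists>K. finite K \<and> (Oring :: 'a fls set) \<subseteq> (\<Union>x\<in>K. ball x e)"
    using finite_embed_img by blast
qed

lemma Oring_complete: "complete (Oring :: 'a::{finite,field} fls set)"
  unfolding complete_def
proof (intro allI impI, elim conjE)
  fix X :: "nat \<Rightarrow> 'a fls"
  assume XO: "\<forall>n. X n \<in> Oring" and C: "Cauchy X"
  have "\<forall>i::nat. \<exists>M. \<forall>m\<ge>M. \<forall>n\<ge>M. vge (int i + 1) (X m - X n)"
  proof
    fix i :: nat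
    have pos: "(0::real) < 2 powr (- real_of_int (int i))" by simp
    obtain M where M: "\<forall>m\<ge>M. \<forall>n\<ge>M. dist (X m) (X n) < 2 powr (- real_of_int (int i))"
      using C[unfolded Cauchy_def, rule_format, OF pos] by blast
    show "\<exists>M. \<forall>m\<ge>M. \<forall>n\<ge>M. vge (int i + 1) (X m - X n)"
      using M by (intro exI[of _ M]) (auto intro: tabs_less_vge simp: dist_tabs)
  qed
  then obtain M where M: "\<And>i m n. m \<ge> M i \<Longrightarrow> n \<ge> M i \<Longrightarrow> vge (int i + 1) (X m - X n)"
    by metis
  define M' where "M' i = (\<Sum>j\<le>i. M j)" for i
  have M'ge: "M i' \<le> M' i" if "i' \<le> i" for i i'
    unfolding M'_def using that by (intro member_le_sum) auto
  have M'dmono: "M' i' \<le> M' i" if "i' \<le> i" for i i'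
    unfolding M'_def using that by (intro sum_mono2) auto
  define L where "L = fps_to_fls (Abs_fps (\<lambda>i. X (M' i) $$ int i))"
  have LO: "L \<in> Oring" by (simp add: L_def Oring_def fls_subdegree_fls_to_fps_gt0)
  have close: "vge (int K + 1) (X n - L)" if n: "n \<ge> M' K" for n K
    unfolding vge_def
  proof (intro allI impI)
    fix i :: int assume i: "i < int K + 1"
    show "(X n - L) $$ i = 0"
    proof (cases "i < 0")
      case True
      then show ?thesis using XO[rule_format, of n] by (simp add: L_def Oring_vge vge_def)
    next
      case False
      define i' where "i' = nat i"
      have ii: "i = int i'" using False by (simp add: i'_def)
      have "i' \<le> K" using i ii by simp
      then have "n \<ge> M i'" "M' i' \<ge> M i'" using n M'ge M'dmono by (auto intro: order_trans)
      then have "vge (int i' + 1) (X n - X (M' i'))" using M by blast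
      then have "X n $$ i = X (M' i') $$ i" unfolding vge_def ii by simp
      then show ?thesis by (simp add: L_def ii)
    qed
  qed
  have "X \<longlonglongrightarrow> L"
    unfolding lim_sequentially
  proof (intro allI impI)
    fix r :: real assume "0 < r"
    then obtain K :: nat where K: "2 powr (- real K) < r" using small_pow by blast
    have "dist (X n) L < r" if "n \<ge> M' K" for n
    proof -
      have "tabs (X n - L) < 2 powr (- real_of_int (int K))"
        using close[OF that] by (rule vge_tabs_less)
      then show ?thesis using K by (simp add: dist_tabs)
    qed
    then show "\<exists>no. \<forall>n\<ge>no. dist (X n) L < r" by blast
  qed
  then show "\<exists>l\<in>Oring. X \<longlonglongrightarrow> l" using LO by blast
qed

lemma Oring_compact: "compact (Oring :: 'a::{finite,field} fls set)"
  using compact_eq_totally_bounded Oring_complete Oring_totally_bounded by blast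

lemma cont_bounded:
  assumes "continuous_on Oring (f :: 'a::{finite,field} fls \<Rightarrow> 'a fls)"
  shows "\<exists>B. \<forall>x\<in>Oring. tabs (f x) \<le> B"
proof -
  have "compact (f ` Oring)" by (rule compact_continuous_image[OF assms Oring_compact])
  then have "bounded (f ` Oring)" by (rule compact_imp_bounded)
  then obtain y e where ye: "\<forall>z\<in>f ` Oring. dist y z \<le> e" unfolding bounded_def by blast
  have "tabs (f x) \<le> e + dist y 0" if "x \<in> Oring" for x
  proof -
    have "tabs (f x) = dist (f x) 0" by (simp add: tabs_def)
    also have "\<dots> \<le> dist (f x) y + dist y 0" by (rule dist_triangle)
    also have "\<dots> \<le> e + dist y 0" using ye that by (simp add: dist_commute)
    finally show ?thesis .
  qed
  then show ?thesis by blast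
qed

lemma cont_vge_bounded:
  assumes "continuous_on Oring (f :: 'a::{finite,field} fls \<Rightarrow> 'a fls)"
  shows "\<exists>t. \<forall>x\<in>Oring. vge t (f x)"
proof -
  obtain B where B: "\<forall>x\<in>Oring. tabs (f x) \<le> B" using cont_bounded[OF assms] by blast
  obtain K :: nat where K: "B < 2 ^ K" using real_arch_pow[of 2 B] by auto
  have "\<forall>x\<in>Oring. vge (- int K) (f x)"
  proof
    fix x :: "'a fls" assume "x \<in> Oring"
    then have "tabs (f x) \<le> B" using B by blast
    then have "tabs (f x) \<le> 2 powr (- real_of_int (- int K))"
      using K by (simp add: powr_realpow)
    then show "vge (- int K) (f x)" by (simp add: vge_tabs)
  qed
  then show ?thesis by blast
qed

lemma cont_uniform:
  assumes "continuous_on Oring (f :: 'a::{finite,field} fls \<Rightarrow> 'a fls)"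
  shows "\<exists>k::nat. \<forall>x\<in>Oring. \<forall>x'\<in>Oring. vge (int k) (x' - x) \<longrightarrow> vge t (f x' - f x)"
proof -
  have uc: "uniformly_continuous_on Oring f"
    by (rule compact_uniformly_continuous[OF assms Oring_compact])
  have pos: "(0::real) < 2 powr (- real_of_int (t - 1))" by simp
  obtain d where d: "d > 0" "\<forall>x\<in>Oring. \<forall>x'\<in>Oring. dist x' x < d \<longrightarrow> dist (f x') (f x) < 2 powr (- real_of_int (t - 1))"
    using uc[unfolded uniformly_continuous_on_def, rule_format, OF pos] by blast
  obtain k :: nat where k: "2 powr (- real k) < d" using small_pow d(1) by blast
  have "vge t (f x' - f x)" if "x \<in> Oring" "x' \<in> Oring" "vge (int k) (x' - x)" for x x'
  proof -
    have "tabs (x' - x) \<le> 2 powr (- real k)" using that(3) by (simp add: vge_tabs)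
    then have "dist x' x < d" using k by (simp add: dist_tabs)
    then have "tabs (f x' - f x) < 2 powr (- real_of_int (t - 1))" using d that by (simp add: dist_tabs)
    then show ?thesis using tabs_less_vge[of _ "t - 1"] by simp
  qed
  then show ?thesis by blast
qed


lemma cont_vge_iff:
  "continuous_on S (f :: 'a::{finite,field} fls \<Rightarrow> 'a fls) \<longleftrightarrow>
    (\<forall>x\<in>S. \<forall>t. \<exists>k. \<forall>x'\<in>S. vge k (x' - x) \<longrightarrow> vge t (f x' - f x))"
proof
  assume c: "continuous_on S f"
  show "\<forall>x\<in>S. \<forall>t. \<exists>k. \<forall>x'\<in>S. vge k (x' - x) \<longrightarrow> vge t (f x' - f x)"
  proof (intro ballI allI)
    fix x t assume x: "x \<in> S"
    have pos: "(0::real) < 2 powr (- real_of_int (t - 1))" by simp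
    obtain d where d: "d > 0" "\<forall>x'\<in>S. dist x' x < d \<longrightarrow> dist (f x') (f x) < 2 powr (- real_of_int (t - 1))"
      using c[unfolded continuous_on_iff, rule_format, OF x pos] by blast
    obtain k :: nat where k: "2 powr (- real k) < d" using small_pow d(1) by blast
    have "vge t (f x' - f x)" if "x' \<in> S" "vge (int k) (x' - x)" for x'
    proof -
      have "tabs (x' - x) \<le> 2 powr (- real k)" using that(2) by (simp add: vge_tabs)
      then have "dist x' x < d" using k by (simp add: dist_tabs)
      then have "tabs (f x' - f x) < 2 powr (- real_of_int (t - 1))" using d that by (simp add: dist_tabs)
      then show ?thesis using tabs_less_vge[of _ "t - 1"] by simp
    qed
    then show "\<exists>k. \<forall>x'\<in>S. vge k (x' - x) \<longrightarrow> vge t (f x' - f x)" by blast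
  qed
next
  assume h: "\<forall>x\<in>S. \<forall>t. \<exists>k. \<forall>x'\<in>S. vge k (x' - x) \<longrightarrow> vge t (f x' - f x)"
  show "continuous_on S f"
    unfolding continuous_on_iff
  proof (intro ballI allI impI)
    fix x and e :: real assume x: "x \<in> S" and e: "0 < e"
    obtain K :: nat where K: "2 powr (- real K) < e" using small_pow e by blast
    obtain k where k: "\<forall>x'\<in>S. vge k (x' - x) \<longrightarrow> vge (int K) (f x' - f x)"
      using h x by blast
    have "dist (f x') (f x) < e" if "x' \<in> S" "dist x' x < 2 powr (- real_of_int (k - 1))" for x'
    proof -
      have "vge k (x' - x)" using that(2) tabs_less_vge[of "x' - x" "k - 1"] by (simp add: dist_tabs)
      then have "vge (int K) (f x' - f x)" using k that(1) by blast
      then have "tabs (f x' - f x) \<le> 2 powr (- real K)" by (simp add: vge_tabs)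
      then show ?thesis using K by (simp add: dist_tabs)
    qed
    moreover have "(0::real) < 2 powr (- real_of_int (k - 1))" by simp
    ultimately show "\<exists>d>0. \<forall>x'\<in>S. dist x' x < d \<longrightarrow> dist (f x') (f x) < e" by blast
  qed
qed

lemma cont_const: "continuous_on S (\<lambda>x. c :: 'a::{finite,field} fls)"
  by (rule continuous_on_const)

lemma cont_id: "continuous_on S (\<lambda>x :: 'a::{finite,field} fls. x)"
  by (rule continuous_on_id)

lemma cont_add:
  assumes "continuous_on S (f :: 'a::{finite,field} fls \<Rightarrow> 'a fls)" "continuous_on S g"
  shows "continuous_on S (\<lambda>x. f x + g x)"
  unfolding cont_vge_iff
proof (intro ballI allI)
  fix x t assume x: "x \<in> S"
  obtain k1 where k1: "\<forall>x'\<in>S. vge k1 (x' - x) \<longrightarrow> vge t (f x' - f x)"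
    using assms(1)[unfolded cont_vge_iff] x by blast
  obtain k2 where k2: "\<forall>x'\<in>S. vge k2 (x' - x) \<longrightarrow> vge t (g x' - g x)"
    using assms(2)[unfolded cont_vge_iff] x by blast
  have "vge t ((f x' + g x') - (f x + g x))" if "x' \<in> S" "vge (max k1 k2) (x' - x)" for x'
  proof -
    have "vge t (f x' - f x)" "vge t (g x' - g x)"
      using k1 k2 that vge_mono[OF that(2)] by auto
    then have "vge t ((f x' - f x) + (g x' - g x))" by (rule vge_add)
    then show ?thesis by (simp add: algebra_simps)
  qed
  then show "\<exists>k. \<forall>x'\<in>S. vge k (x' - x) \<longrightarrow> vge t ((f x' + g x') - (f x + g x))" by blast
qed

lemma cont_uminus:
  assumes "continuous_on S (f :: 'a::{finite,field} fls \<Rightarrow> 'a fls)"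
  shows "continuous_on S (\<lambda>x. - f x)"
  unfolding cont_vge_iff
proof (intro ballI allI)
  fix x t assume x: "x \<in> S"
  obtain k1 where k1: "\<forall>x'\<in>S. vge k1 (x' - x) \<longrightarrow> vge t (f x' - f x)"
    using assms(1)[unfolded cont_vge_iff] x by blast
  have "vge t ((- f x') - (- f x))" if "x' \<in> S" "vge k1 (x' - x)" for x'
    using vge_uminus[of t "f x' - f x"] k1 that by simp
  then show "\<exists>k. \<forall>x'\<in>S. vge k (x' - x) \<longrightarrow> vge t ((- f x') - (- f x))" by blast
qed

lemma cont_diff:
  assumes "continuous_on S (f :: 'a::{finite,field} fls \<Rightarrow> 'a fls)" "continuous_on S g"
  shows "continuous_on S (\<lambda>x. f x - g x)"
  using cont_add[OF assms(1) cont_uminus[OF assms(2)]] by simp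

lemma cont_mult:
  assumes "continuous_on S (f :: 'a::{finite,field} fls \<Rightarrow> 'a fls)" "continuous_on S g"
  shows "continuous_on S (\<lambda>x. f x * g x)"
  unfolding cont_vge_iff
proof (intro ballI allI)
  fix x t assume x: "x \<in> S"
  define sf where "sf = fls_subdegree (f x)"
  define sg where "sg = fls_subdegree (g x)"
  define u where "u = max sg (t - sf)"
  obtain k1 where k1: "\<forall>x'\<in>S. vge k1 (x' - x) \<longrightarrow> vge (t - sg) (f x' - f x)"
    using assms(1)[unfolded cont_vge_iff] x by blast
  obtain k2 where k2: "\<forall>x'\<in>S. vge k2 (x' - x) \<longrightarrow> vge u (g x' - g x)"
    using assms(2)[unfolded cont_vge_iff] x by blast
  have "vge t (f x' * g x' - f x * g x)" if "x' \<in> S" "vge (max k1 k2) (x' - x)" for x'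
  proof -
    have a: "vge (t - sg) (f x' - f x)" "vge u (g x' - g x)"
      using k1 k2 that vge_mono[OF that(2)] by auto
    have "vge sg (g x' - g x)" using vge_mono[OF a(2)] u_def by simp
    then have "vge sg (g x + (g x' - g x))" using vge_subdeg[of "g x"] sg_def vge_add by blast
    then have gx': "vge sg (g x')" by simp
    have p1: "vge t ((f x' - f x) * g x')" using vge_mult[OF a(1) gx'] by simp
    have "vge (sf + u) (f x * (g x' - g x))" using vge_mult[OF vge_subdeg a(2)] sf_def by simp
    then have p2: "vge t (f x * (g x' - g x))" by (rule vge_mono) (simp add: u_def)
    have "vge t ((f x' - f x) * g x' + f x * (g x' - g x))" using p1 p2 by (rule vge_add)
    then show ?thesis by (simp add: algebra_simps)
  qed
  then show "\<exists>k. \<forall>x'\<in>S. vge k (x' - x) \<longrightarrow> vge t (f x' * g x' - f x * g x)" by blast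
qed

lemma cont_sum:
  assumes "\<And>i. i \<in> A \<Longrightarrow> continuous_on S (f i :: 'a::{finite,field} fls \<Rightarrow> 'a fls)"
  shows "continuous_on S (\<lambda>x. \<Sum>i\<in>A. f i x)"
  using assms
proof (induction A rule: infinite_finite_induct)
  case (infinite A) then show ?case by (simp add: cont_const)
next
  case empty then show ?case by (simp add: cont_const)
next
  case (insert a A)
  then show ?case by (simp add: cont_add)
qed

lemma cont_prod:
  assumes "\<And>i. i \<in> A \<Longrightarrow> continuous_on S (f i :: 'a::{finite,field} fls \<Rightarrow> 'a fls)"
  shows "continuous_on S (\<lambda>x. \<Prod>i\<in>A. f i x)"
  using assms
proof (induction A rule: infinite_finite_induct)
  case (infinite A) then show ?case by (simp add: cont_const)
next
  case empty then show ?case by (simp add: cont_const)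
next
  case (insert a A)
  then show ?case by (simp add: cont_mult)
qed

lemma cont_power:
  assumes "continuous_on S (f :: 'a::{finite,field} fls \<Rightarrow> 'a fls)"
  shows "continuous_on S (\<lambda>x. f x ^ n)"
proof (induction n)
  case 0 then show ?case by (simp add: cont_const)
next
  case (Suc n) then show ?case using cont_mult[OF assms Suc] by simp
qed


definition dmono :: "nat \<Rightarrow> 'a::{finite,field} fls \<Rightarrow> 'a" where
  "dmono j x = (\<Prod>n\<le>j. (x $$ int n) ^ digit CARD('a) j n)"

lemma n_less_qn: "n < CARD('a::{finite,field}) ^ n"
proof -
  have "n < 2 ^ n" by (rule less_exp)
  also have "(2::nat) ^ n \<le> CARD('a) ^ n" using card_ge2[where 'a='a] by (rule power_mono) simp
  finally show ?thesis .
qed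

lemma mono_monoK:
  assumes j: "j < CARD('a) ^ k"
  shows "dmono j (x :: 'a::{finite,field} fls) = monoK k j (digvec k x)"
proof -
  let ?q = "CARD('a)"
  define h where "h n = (x $$ int n) ^ digit ?q j n" for n
  have "dmono j x = prod h {..j}" by (simp add: dmono_def h_def)
  also have "\<dots> = prod h ({..j} \<inter> {..<k})"
  proof (rule prod.mono_neutral_right)
    show "\<forall>n\<in>{..j} - {..j} \<inter> {..<k}. h n = 1"
    proof
      fix n assume "n \<in> {..j} - {..j} \<inter> {..<k}"
      then have kn: "k \<le> n" by auto
      show "h n = 1" using digit_high[OF j kn] by (simp add: h_def)
    qed
  qed auto
  also have "\<dots> = prod h {..<k}"
  proof (rule prod.mono_neutral_left)
    show "\<forall>n\<in>{..<k} - {..j} \<inter> {..<k}. h n = 1"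
    proof
      fix n assume "n \<in> {..<k} - {..j} \<inter> {..<k}"
      then have "j < n" by auto
      then have "j < ?q ^ n" using n_less_qn[where 'a='a, of n] by simp
      then show "h n = 1" using digit_high[of j ?q n n] by (simp add: h_def)
    qed
  qed auto
  also have "\<dots> = monoK k j (digvec k x)"
    unfolding monoK_def h_def digvec_def by (rule prod.cong) auto
  finally show ?thesis .
qed

lemma sup_le:
  assumes "\<forall>x\<in>Oring. tabs (h x) \<le> B"
  shows "supnorm (h :: 'a::{finite,field} fls \<Rightarrow> 'a fls) \<le> B"
  unfolding supnorm_def using assms zero_Oring by (intro cSUP_least) blast+

lemma sup_ge:
  assumes "\<forall>x\<in>Oring. tabs (h x) \<le> B" "x \<in> Oring"
  shows "tabs (h x) \<le> supnorm (h :: 'a::{finite,field} fls \<Rightarrow> 'a fls)"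
  unfolding supnorm_def
  by (rule cSUP_upper) (use assms in \<open>auto intro: bdd_aboveI2\<close>)

lemma sup_nonneg:
  assumes "\<forall>x\<in>Oring. tabs (h x) \<le> B"
  shows "0 \<le> supnorm (h :: 'a::{finite,field} fls \<Rightarrow> 'a fls)"
  using sup_ge[OF assms zero_Oring] tabs_nonneg[of "h 0"] by linarith

lemma vge_step: "vge t z \<Longrightarrow> z $$ t = 0 \<Longrightarrow> vge (t + 1) z"
  unfolding vge_def by (metis zless_add1_eq)

lemma tabs_exact: "vge t z \<Longrightarrow> z $$ t \<noteq> 0 \<Longrightarrow> tabs (z::'a::{finite,field} fls) = 2 powr (- real_of_int t)"
proof -
  assume a: "vge t z" "z $$ t \<noteq> 0"
  then have z: "z \<noteq> 0" by auto
  have "t \<le> fls_subdegree z" using a z vge_iff by auto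
  moreover have "fls_subdegree z \<le> t" using a(2) by (rule fls_subdegree_leI)
  ultimately show ?thesis using z by (simp add: tabs_def2)
qed

locale rb =
  fixes g :: "nat \<Rightarrow> 'a::{finite,field} fls \<Rightarrow> 'a fls" and C :: "nat \<Rightarrow> 'a"
  assumes g_cont: "\<And>j. continuous_on Oring (g j)"
    and g_O: "\<And>j x. x \<in> Oring \<Longrightarrow> g j x \<in> Oring"
    and C_nz: "\<And>j. C j \<noteq> 0"
    and g_red: "\<And>j x. x \<in> Oring \<Longrightarrow> g j x $$ 0 = C j * dmono j x"
begin

lemma indep:
  assumes "\<exists>n<N. b n \<noteq> 0"
  shows "\<exists>x\<in>Oring. (\<Sum>n<N. b n * C n * dmono n x) \<noteq> 0"
proof -
  let ?q = "CARD('a)"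
  define k where "k = N"
  have Nk: "N \<le> ?q ^ k" using n_less_qn[where 'a='a, of N] by (simp add: k_def)
  define c where "c j = (if j < N then b j * C j else 0)" for j
  have "\<not> (\<forall>j<?q^k. c j = 0)"
    using assms Nk C_nz by (auto simp: c_def)
  then obtain d where d: "d \<in> Vk k" and nz: "(\<Sum>j<?q^k. c j * monoK k j d) \<noteq> 0"
    using indepK[of k c] by blast
  define x where "x = embd k d"
  have xO: "x \<in> Oring" by (simp add: x_def embed_Oring)
  have "(\<Sum>j<?q^k. c j * monoK k j d) = (\<Sum>j<N. c j * monoK k j d)"
    by (rule sum.mono_neutral_right) (use Nk in \<open>auto simp: c_def\<close>)
  also have "\<dots> = (\<Sum>n<N. b n * C n * dmono n x)"
  proof (rule sum.cong[OF refl])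
    fix n assume n: "n \<in> {..<N}"
    then have "n < ?q ^ k" using Nk by simp
    then have "dmono n x = monoK k n d" by (simp add: mono_monoK x_def digvec_embed[OF d])
    then show "c n * monoK k n d = b n * C n * dmono n x" using n by (simp add: c_def)
  qed
  finally show ?thesis using nz xO by auto
qed

lemma fin_upper:
  assumes x: "x \<in> Oring" and B: "\<forall>n<N. tabs (a n) \<le> B" "0 \<le> B"
  shows "tabs (\<Sum>n<N. a n * g n x) \<le> B"
proof (rule tabs_sum_le)
  fix n assume "n \<in> {..<N}"
  then have "tabs (a n) \<le> B" using B by auto
  moreover have "tabs (g n x) \<le> 1" using g_O[OF x] by (rule tabs_le1)
  ultimately show "tabs (a n * g n x) \<le> B"
    using tabs_nonneg[of "a n"] tabs_nonneg[of "g n x"] by (simp add: tabs_mult mult_le_one mult_le_cancel_left1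
        order_trans[OF mult_left_le])
qed (use B in auto)

lemma fin_lower:
  assumes n0: "n0 < N"
  shows "\<exists>x\<in>Oring. tabs (a n0) \<le> tabs (\<Sum>n<N. a n * g n x)"
proof (cases "a n0 = 0")
  case True
  then show ?thesis by (intro bexI[of _ 0]) (auto simp: tabs_nonneg)
next
  case False
  define V where "V = (\<lambda>n. fls_subdegree (a n)) ` {n. n < N \<and> a n \<noteq> 0}"
  have Vfin: "finite V" by (simp add: V_def)
  have Vne: "V \<noteq> {}" using False n0 by (auto simp: V_def)
  define t where "t = Min V"
  have tle: "t \<le> fls_subdegree (a n)" if "n < N" "a n \<noteq> 0" for n
    unfolding t_def using Vfin that by (intro Min_le) (auto simp: V_def)
  have vt: "vge t (a n)" if "n < N" for n
    using tle[OF that] vge_iff[of "a n" t] by (cases "a n = 0") auto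
  obtain n1 where n1: "n1 < N" "a n1 \<noteq> 0" "t = fls_subdegree (a n1)"
    using Min_in[OF Vfin Vne] unfolding t_def[symmetric] by (auto simp: V_def)
  define b where "b n = a n $$ t" for n
  have "b n1 \<noteq> 0" using n1 by (simp add: b_def)
  then obtain x where x: "x \<in> Oring" and nz: "(\<Sum>n<N. b n * C n * dmono n x) \<noteq> 0"
    using indep[of N b] n1 by blast
  define S where "S = (\<Sum>n<N. a n * g n x)"
  have vS: "vge t S" unfolding S_def
    using vge_mult[OF vt, of _ 0] g_O[OF x] by (intro vge_sum) (auto simp: Oring_vge)
  have "S $$ t = (\<Sum>n<N. (a n * g n x) $$ t)" by (simp add: S_def fls_nth_sum)
  also have "\<dots> = (\<Sum>n<N. b n * C n * dmono n x)"
  proof (rule sum.cong[OF refl])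
    fix n assume "n \<in> {..<N}"
    then have "(a n * g n x) $$ t = a n $$ t * g n x $$ 0"
      using vt g_O[OF x] by (intro mult_nth_vge) (auto simp: Oring_vge)
    then show "(a n * g n x) $$ t = b n * C n * dmono n x"
      using g_red[OF x] by (simp add: b_def mult.assoc)
  qed
  finally have "S $$ t \<noteq> 0" using nz by simp
  then have "tabs S = 2 powr (- real_of_int t)" using vS by (rule tabs_exact[rotated])
  moreover have "tabs (a n0) \<le> 2 powr (- real_of_int t)"
    using vt[OF n0] by (simp add: vge_tabs)
  ultimately have "tabs (a n0) \<le> tabs (\<Sum>n<N. a n * g n x)" unfolding S_def by simp
  then show ?thesis using x by blast
qed

end


definition mx :: "(nat \<Rightarrow> 'a::{finite,field} fls) \<Rightarrow> nat \<Rightarrow> real" where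
  "mx a N = Max (insert 0 ((\<lambda>n. tabs (a n)) ` {..<N}))"

lemma mx_ge: "n < N \<Longrightarrow> tabs (a n) \<le> mx a N"
  unfolding mx_def by (rule Max_ge) auto

lemma mx_nonneg: "0 \<le> mx a N"
  unfolding mx_def by (rule Max_ge) auto

lemma mx_in: "mx a N = 0 \<or> (\<exists>n<N. mx a N = tabs (a n))"
proof -
  have "mx a N \<in> insert 0 ((\<lambda>n. tabs (a n)) ` {..<N})"
    unfolding mx_def by (rule Max_in) auto
  then show ?thesis by auto
qed

lemma mx_mono: "incseq (mx a)"
  unfolding incseq_Suc_iff mx_def
  by (intro allI Max_mono) auto

lemma bdd_tabs: "(\<lambda>n. tabs (a n)) \<longlonglongrightarrow> l \<Longrightarrow> bdd_above (range (\<lambda>n. tabs (a n)))"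
  by (intro bounded_imp_bdd_above convergent_imp_bounded)

lemma mx_lim:
  assumes "(\<lambda>n. tabs (a n)) \<longlonglongrightarrow> 0"
  shows "mx a \<longlonglongrightarrow> (SUP n. tabs (a n))"
proof -
  have bdd: "bdd_above (range (\<lambda>n. tabs (a n)))" using bdd_tabs[OF assms] .
  have supge0: "0 \<le> (SUP n. tabs (a n))"
    using cSUP_upper[OF UNIV_I bdd, of 0] tabs_nonneg[of "a 0"] by linarith
  have mxle: "mx a N \<le> (SUP n. tabs (a n))" for N
    using mx_in[of a N] supge0 cSUP_upper[OF UNIV_I bdd] by auto
  have bdd2: "bdd_above (range (mx a))" using mxle by (intro bdd_aboveI2) 
  have lim: "mx a \<longlonglongrightarrow> Sup (range (mx a))" by (rule LIMSEQ_incseq_SUP[OF bdd2 mx_mono])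
  have "Sup (range (mx a)) = (SUP n. tabs (a n))"
  proof (rule antisym)
    show "Sup (range (mx a)) \<le> (SUP n. tabs (a n))" by (rule cSUP_least) (auto intro: mxle)
    show "(SUP n. tabs (a n)) \<le> Sup (range (mx a))"
    proof (rule cSUP_least)
      fix n
      have "tabs (a n) \<le> mx a (Suc n)" by (rule mx_ge) simp
      also have "\<dots> \<le> Sup (range (mx a))" by (rule cSUP_upper[OF UNIV_I bdd2])
      finally show "tabs (a n) \<le> Sup (range (mx a))" .
    qed simp
  qed
  then show ?thesis using lim by simp
qed

context rb
begin

lemma S_bound: "x \<in> Oring \<Longrightarrow> tabs (\<Sum>n<N. a n * g n x) \<le> mx a N"
  by (rule fin_upper) (auto intro: mx_ge mx_nonneg)

lemma sup_S: "supnorm (\<lambda>x. \<Sum>n<N. a n * g n x) = mx a N"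
proof (rule antisym)
  show "supnorm (\<lambda>x. \<Sum>n<N. a n * g n x) \<le> mx a N"
    by (rule sup_le) (auto intro: S_bound)
  have bd: "\<forall>x\<in>Oring. tabs (\<Sum>n<N. a n * g n x) \<le> mx a N" by (auto intro: S_bound)
  show "mx a N \<le> supnorm (\<lambda>x. \<Sum>n<N. a n * g n x)"
  proof (cases "mx a N = 0")
    case True then show ?thesis using sup_nonneg[OF bd] by simp
  next
    case False
    then obtain n0 where n0: "n0 < N" "mx a N = tabs (a n0)" using mx_in[of a N] by auto
    obtain x where x: "x \<in> Oring" "tabs (a n0) \<le> tabs (\<Sum>n<N. a n * g n x)"
      using fin_lower[OF n0(1)] by blast
    then show ?thesis using n0(2) sup_ge[OF bd x(1)] by simp
  qed
qed

lemma norm_eq: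
  assumes f: "CO f" and a0: "(\<lambda>n. tabs (a n)) \<longlonglongrightarrow> 0"
    and conv: "(\<lambda>N. supnorm (\<lambda>x. f x - (\<Sum>n<N. a n * g n x))) \<longlonglongrightarrow> 0"
  shows "supnorm f = (SUP n. tabs (a n))"
proof -
  obtain Bf where Bf: "\<forall>x\<in>Oring. tabs (f x) \<le> Bf"
    using cont_bounded f unfolding CO_def by blast
  define R where "R N x = f x - (\<Sum>n<N. a n * g n x)" for N x
  have Rb: "\<forall>x\<in>Oring. tabs (R N x) \<le> Bf + mx a N" for N
  proof
    fix x :: "'a fls" assume x: "x \<in> Oring"
    have "tabs (R N x) \<le> tabs (f x) + tabs (\<Sum>n<N. a n * g n x)"
      unfolding R_def using tabs_diff[of "f x" "\<Sum>n<N. a n * g n x"] tabs_nonneg[of "f x"] tabs_nonneg[of "\<Sum>n<N. a n * g n x"] by linarith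
    then show "tabs (R N x) \<le> Bf + mx a N" using Bf[rule_format, OF x] S_bound[OF x, where a=a and N=N] by linarith
  qed
  have Sb: "\<forall>x\<in>Oring. tabs (\<Sum>n<N. a n * g n x) \<le> mx a N" for N by (auto intro: S_bound)
  have d: "\<bar>supnorm f - mx a N\<bar> \<le> supnorm (R N)" for N
  proof -
    have "supnorm f \<le> mx a N + supnorm (R N)"
    proof (rule sup_le, rule ballI)
      fix x :: "'a fls" assume x: "x \<in> Oring"
      have "f x = (\<Sum>n<N. a n * g n x) + R N x" by (simp add: R_def)
      then have "tabs (f x) \<le> tabs (\<Sum>n<N. a n * g n x) + tabs (R N x)" by (metis tabs_add_le)
      also have "\<dots> \<le> mx a N + supnorm (R N)"
        using S_bound[OF x] sup_ge[OF Rb x] by (intro add_mono) auto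
      finally show "tabs (f x) \<le> mx a N + supnorm (R N)" .
    qed
    moreover have "mx a N \<le> supnorm f + supnorm (R N)"
    proof -
      have "supnorm (\<lambda>x. \<Sum>n<N. a n * g n x) \<le> supnorm f + supnorm (R N)"
      proof (rule sup_le, rule ballI)
        fix x :: "'a fls" assume x: "x \<in> Oring"
        have "(\<Sum>n<N. a n * g n x) = f x + (- R N x)" by (simp add: R_def)
        then have "tabs (\<Sum>n<N. a n * g n x) \<le> tabs (f x) + tabs (- R N x)" by (metis tabs_add_le)
        also have "\<dots> \<le> supnorm f + supnorm (R N)"
          using sup_ge[OF Bf x] sup_ge[OF Rb x] by (intro add_mono) (auto simp: tabs_uminus)
        finally show "tabs (\<Sum>n<N. a n * g n x) \<le> supnorm f + supnorm (R N)" .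
      qed
      then show ?thesis using sup_S by simp
    qed
    ultimately show ?thesis by linarith
  qed
  have RN: "(\<lambda>N. supnorm (R N)) \<longlonglongrightarrow> 0" using conv by (simp add: R_def[abs_def])
  have "(\<lambda>N. supnorm f - mx a N) \<longlonglongrightarrow> 0"
    by (rule Lim_null_comparison[OF _ RN]) (use d in auto)
  then have "(\<lambda>N. supnorm f - (supnorm f - mx a N)) \<longlonglongrightarrow> supnorm f - 0"
    by (intro tendsto_diff tendsto_const)
  then have "mx a \<longlonglongrightarrow> supnorm f" by simp
  then show ?thesis using mx_lim[OF a0] LIMSEQ_unique by blast
qed

lemma uniq:
  assumes f: "CO f"
    and a0: "(\<lambda>n. tabs (a n)) \<longlonglongrightarrow> 0"
    and conv: "(\<lambda>N. supnorm (\<lambda>x. f x - (\<Sum>n<N. a n * g n x))) \<longlonglongrightarrow> 0"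
    and a0': "(\<lambda>n. tabs (a' n)) \<longlonglongrightarrow> 0"
    and conv': "(\<lambda>N. supnorm (\<lambda>x. f x - (\<Sum>n<N. a' n * g n x))) \<longlonglongrightarrow> 0"
  shows "a = a'"
proof -
  obtain Bf where Bf: "\<forall>x\<in>Oring. tabs (f x) \<le> Bf"
    using cont_bounded f unfolding CO_def by blast
  define b where "b n = a n - a' n" for n
  define R where "R N x = f x - (\<Sum>n<N. a n * g n x)" for N x
  define R' where "R' N x = f x - (\<Sum>n<N. a' n * g n x)" for N x
  have Rb: "\<forall>x\<in>Oring. tabs (R N x) \<le> Bf + mx a N" for N
  proof
    fix x :: "'a fls" assume x: "x \<in> Oring"
    have "tabs (R N x) \<le> tabs (f x) + tabs (\<Sum>n<N. a n * g n x)"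
      unfolding R_def using tabs_diff[of "f x" "\<Sum>n<N. a n * g n x"] tabs_nonneg[of "f x"] tabs_nonneg[of "\<Sum>n<N. a n * g n x"] by linarith
    then show "tabs (R N x) \<le> Bf + mx a N" using Bf[rule_format, OF x] S_bound[OF x, where a=a and N=N] by linarith
  qed
  have Rb': "\<forall>x\<in>Oring. tabs (R' N x) \<le> Bf + mx a' N" for N
  proof
    fix x :: "'a fls" assume x: "x \<in> Oring"
    have "tabs (R' N x) \<le> tabs (f x) + tabs (\<Sum>n<N. a' n * g n x)"
      unfolding R'_def using tabs_diff[of "f x" "\<Sum>n<N. a' n * g n x"] tabs_nonneg[of "f x"] tabs_nonneg[of "\<Sum>n<N. a' n * g n x"] by linarith
    then show "tabs (R' N x) \<le> Bf + mx a' N" using Bf[rule_format, OF x] S_bound[OF x, where a=a' and N=N] by linarith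
  qed
  have b0: "(\<lambda>n. tabs (b n)) \<longlonglongrightarrow> 0"
  proof (rule Lim_null_comparison)
    show "\<forall>\<^sub>F n in sequentially. norm (tabs (b n)) \<le> tabs (a n) + tabs (a' n)"
    proof (intro always_eventually allI)
      fix n
      have "tabs (b n) \<le> max (tabs (a n)) (tabs (a' n))" unfolding b_def by (rule tabs_diff)
      then show "norm (tabs (b n)) \<le> tabs (a n) + tabs (a' n)"
        using tabs_nonneg[of "b n"] tabs_nonneg[of "a n"] tabs_nonneg[of "a' n"] by simp
    qed
    show "(\<lambda>n. tabs (a n) + tabs (a' n)) \<longlonglongrightarrow> 0" using tendsto_add[OF a0 a0'] by simp
  qed
  have key: "tabs (0 - (\<Sum>n<N. b n * g n x)) \<le> supnorm (R N) + supnorm (R' N)" if x: "x \<in> Oring" for N x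
  proof -
    have "0 - (\<Sum>n<N. b n * g n x) = R N x + (- R' N x)"
      by (simp add: R_def R'_def b_def algebra_simps sum_subtractf)
    then have "tabs (0 - (\<Sum>n<N. b n * g n x)) \<le> tabs (R N x) + tabs (- R' N x)" by (metis tabs_add_le)
    also have "\<dots> \<le> supnorm (R N) + supnorm (R' N)"
      using sup_ge[OF Rb x] sup_ge[OF Rb' x] by (intro add_mono) (auto simp: tabs_uminus)
    finally show ?thesis .
  qed
  have convb: "(\<lambda>N. supnorm (\<lambda>x. 0 - (\<Sum>n<N. b n * g n x))) \<longlonglongrightarrow> 0"
  proof (rule Lim_null_comparison)
    show "\<forall>\<^sub>F N in sequentially. norm (supnorm (\<lambda>x. 0 - (\<Sum>n<N. b n * g n x))) \<le> supnorm (R N) + supnorm (R' N)"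
    proof (intro always_eventually allI)
      fix N
      have bd: "\<forall>x\<in>Oring. tabs (0 - (\<Sum>n<N. b n * g n x)) \<le> supnorm (R N) + supnorm (R' N)"
        using key by blast
      show "norm (supnorm (\<lambda>x. 0 - (\<Sum>n<N. b n * g n x))) \<le> supnorm (R N) + supnorm (R' N)"
        using sup_le[OF bd] sup_nonneg[OF bd] by simp
    qed
    show "(\<lambda>N. supnorm (R N) + supnorm (R' N)) \<longlonglongrightarrow> 0"
      using tendsto_add[OF conv conv'] by (simp add: R_def[abs_def] R'_def[abs_def])
  qed
  have c0: "CO (\<lambda>x::'a fls. 0::'a fls)" unfolding CO_def by (rule continuous_on_const)
  have "supnorm (\<lambda>x::'a fls. 0::'a fls) = (SUP n. tabs (b n))"
    by (rule norm_eq[OF c0 b0 convb])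
  moreover have "supnorm (\<lambda>x::'a fls. 0::'a fls) = 0"
  proof (rule antisym)
    show "supnorm (\<lambda>x::'a fls. 0::'a fls) \<le> 0" by (rule sup_le) simp
    show "0 \<le> supnorm (\<lambda>x::'a fls. 0::'a fls)" by (rule sup_nonneg[where B=0]) simp
  qed
  ultimately have "(SUP n. tabs (b n)) = 0" by simp
  then have "tabs (b n) \<le> 0" for n using cSUP_upper[OF UNIV_I bdd_tabs[OF b0], of n] by simp
  then have "b n = 0" for n using tabs_nonneg[of "b n"] tabs_eq0[of "b n"] by (meson antisym)
  then show ?thesis by (auto simp: b_def fun_eq_iff)
qed

end


context rb
begin

lemma step:
  assumes hc: "continuous_on Oring h" and ht: "\<forall>x\<in>Oring. vge t (h x)"
  shows "\<exists>c N. (\<forall>j. vge t (c j)) \<and> (\<forall>j\<ge>N. c j = 0) \<and>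
           (\<forall>x\<in>Oring. vge (t + 1) (h x - (\<Sum>j<N. c j * g j x)))"
proof -
  let ?q = "CARD('a)"
  obtain k :: nat where k: "\<forall>x\<in>Oring. \<forall>x'\<in>Oring. vge (int k) (x' - x) \<longrightarrow> vge (t + 1) (h x' - h x)"
    using cont_uniform[OF hc] by blast
  define \<phi> where "\<phi> d = h (embd k d) $$ t" for d
  obtain cb where cb: "\<forall>d\<in>Vk k. \<phi> d = (\<Sum>j<?q^k. cb j * monoK k j d)"
    using spanK by blast
  define N where "N = ?q ^ k"
  define c where "c j = (if j < N then fls_shift (-t) (fls_const (cb j / C j)) else 0)" for j
  have cv: "vge t (c j)" for j
    unfolding c_def vge_def by auto
  have cz: "\<forall>j\<ge>N. c j = 0" by (simp add: c_def)
  have main: "vge (t + 1) (h x - (\<Sum>j<N. c j * g j x))" if x: "x \<in> Oring" for x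
  proof -
    define xe where "xe = embd k (digvec k x)"
    have xeO: "xe \<in> Oring" by (simp add: xe_def embed_Oring)
    have "vge (t + 1) (h x - h xe)"
      using k xeO x embed_close[OF x, of k] unfolding xe_def by blast
    then have "h x $$ t = h xe $$ t" unfolding vge_def by simp
    also have "\<dots> = \<phi> (digvec k x)" by (simp add: \<phi>_def xe_def)
    also have "\<dots> = (\<Sum>j<N. cb j * monoK k j (digvec k x))" using cb digvec_Vk N_def by blast
    also have "\<dots> = (\<Sum>j<N. cb j * dmono j x)"
      by (rule sum.cong[OF refl]) (simp add: N_def mono_monoK)
    finally have hx: "h x $$ t = (\<Sum>j<N. cb j * dmono j x)" .
    have "(\<Sum>j<N. c j * g j x) $$ t = (\<Sum>j<N. (c j * g j x) $$ t)" by (simp add: fls_nth_sum)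
    also have "\<dots> = (\<Sum>j<N. cb j * dmono j x)"
    proof (rule sum.cong[OF refl])
      fix j assume j: "j \<in> {..<N}"
      have "(c j * g j x) $$ t = c j $$ t * g j x $$ 0"
        using cv g_O[OF x] by (intro mult_nth_vge) (auto simp: Oring_vge)
      also have "\<dots> = (cb j / C j) * (C j * dmono j x)" using j g_red[OF x] by (simp add: c_def)
      also have "\<dots> = cb j * dmono j x" using C_nz[of j] by (simp add: field_simps)
      finally show "(c j * g j x) $$ t = cb j * dmono j x" .
    qed
    finally have sx: "(\<Sum>j<N. c j * g j x) $$ t = (\<Sum>j<N. cb j * dmono j x)" .
    have v: "vge t (h x - (\<Sum>j<N. c j * g j x))"
      using ht x cv g_O[OF x] vge_mult[OF cv, of 0]
      by (intro vge_diff vge_sum) (auto simp: Oring_vge)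
    moreover have "(h x - (\<Sum>j<N. c j * g j x)) $$ t = 0" using hx sx by simp
    ultimately show ?thesis by (rule vge_step)
  qed
  show ?thesis using cv cz main by blast
qed


lemma exist:
  assumes f: "CO f"
  shows "\<exists>a. (\<lambda>n. tabs (a n)) \<longlonglongrightarrow> 0 \<and>
             (\<lambda>N. supnorm (\<lambda>x. f x - (\<Sum>n<N. a n * g n x))) \<longlonglongrightarrow> 0"
proof -
  have fc: "continuous_on Oring f" using f by (simp add: CO_def)
  obtain t0 where t0: "\<forall>x\<in>Oring. vge t0 (f x)" using cont_vge_bounded[OF fc] by blast
  define P where "P h t c N \<longleftrightarrow> (\<forall>j. vge t (c j)) \<and> (\<forall>j\<ge>N. c j = 0) \<and>
           (\<forall>x\<in>Oring. vge (t + 1) (h x - (\<Sum>j<N. c j * g j x)))"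
    for h :: "'a fls \<Rightarrow> 'a fls" and t c N
  define stp where "stp h t = (SOME p. P h t (fst p) (snd p))" for h t
  have stpP: "P h t (fst (stp h t)) (snd (stp h t))"
    if hc: "continuous_on Oring h" and ht: "\<forall>x\<in>Oring. vge t (h x)" for h t
  proof -
    obtain c N where "P h t c N" using step[OF hc ht] unfolding P_def by blast
    then have "\<exists>p. P h t (fst p) (snd p)" by (intro exI[of _ "(c, N)"]) simp
    then show ?thesis unfolding stp_def by (rule someI_ex)
  qed
  define hs where "hs = rec_nat f (\<lambda>i h. (\<lambda>x. h x - (\<Sum>j<snd (stp h (t0 + int i)). fst (stp h (t0 + int i)) j * g j x)))"
  define cc where "cc i = fst (stp (hs i) (t0 + int i))" for i
  define NN where "NN i = snd (stp (hs i) (t0 + int i))" for i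
  have hs0: "hs 0 = f" by (simp add: hs_def)
  have hsS: "hs (Suc i) = (\<lambda>x. hs i x - (\<Sum>j<NN i. cc i j * g j x))" for i
    by (simp add: hs_def cc_def NN_def)
  have inv: "continuous_on Oring (hs i) \<and> (\<forall>x\<in>Oring. vge (t0 + int i) (hs i x))" for i
  proof (induction i)
    case 0 then show ?case using fc t0 by (simp add: hs0)
  next
    case (Suc i)
    have P: "P (hs i) (t0 + int i) (cc i) (NN i)"
      unfolding cc_def NN_def using Suc by (intro stpP) auto
    have "continuous_on Oring (hs (Suc i))"
      unfolding hsS using Suc g_cont
      by (intro cont_diff cont_sum cont_mult cont_const) auto
    moreover have "\<forall>x\<in>Oring. vge (t0 + int (Suc i)) (hs (Suc i) x)"
    proof -
      have e: "t0 + int (Suc i) = t0 + int i + 1" by simp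
      show ?thesis using P unfolding P_def hsS e by blast
    qed
    ultimately show ?case by blast
  qed
  have PP: "P (hs i) (t0 + int i) (cc i) (NN i)" for i
    unfolding cc_def NN_def using inv[of i] by (intro stpP) auto
  have ccv: "vge (t0 + int i) (cc i j)" for i j using PP[of i] by (simp add: P_def)
  have ccz: "j \<ge> NN i \<Longrightarrow> cc i j = 0" for i j using PP[of i] by (simp add: P_def)
  have ident: "f x = hs I x + (\<Sum>i<I. \<Sum>j<NN i. cc i j * g j x)" for I x
  proof (induction I)
    case 0 then show ?case by (simp add: hs0)
  next
    case (Suc I) then show ?case by (simp add: hsS)
  qed
  define MM where "MM I = (\<Sum>i<I. NN i)" for I
  have NNle: "i < I \<Longrightarrow> NN i \<le> MM I" for i I
    unfolding MM_def by (rule member_le_sum) auto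
  define A where "A I j = (\<Sum>i<I. cc i j)" for I j
  have regroup: "(\<Sum>i<I. \<Sum>j<NN i. cc i j * g j x) = (\<Sum>j<N. A I j * g j x)" if N: "N \<ge> MM I" for I N x
  proof -
    have "(\<Sum>i<I. \<Sum>j<NN i. cc i j * g j x) = (\<Sum>i<I. \<Sum>j<N. cc i j * g j x)"
    proof (rule sum.cong[OF refl])
      fix i assume "i \<in> {..<I}"
      then have "NN i \<le> N" using NNle N by fastforce
      then show "(\<Sum>j<NN i. cc i j * g j x) = (\<Sum>j<N. cc i j * g j x)"
        by (intro sum.mono_neutral_left) (auto simp: ccz)
    qed
    also have "\<dots> = (\<Sum>j<N. A I j * g j x)"
      by (subst sum.swap) (simp add: A_def sum_distrib_right)
    finally show ?thesis .
  qed
  have Az: "A I j = 0" if jI: "j \<ge> MM I" for I j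
    unfolding A_def
  proof (rule sum.neutral, rule ballI)
    fix i assume "i \<in> {..<I}"
    then have "NN i \<le> MM I" by (intro NNle) simp
    then show "cc i j = 0" using jI by (intro ccz) simp
  qed
  have Anth_low: "d < t0 \<Longrightarrow> A I j $$ d = 0" for I j d
    unfolding A_def fls_nth_sum using ccv unfolding vge_def by (intro sum.neutral) auto
  have Astab: "A I j $$ d = A (nat (d - t0) + 1) j $$ d" if "t0 \<le> d" "nat (d - t0) + 1 \<le> I" for I j d
  proof -
    have "A I j $$ d = (\<Sum>i<I. cc i j $$ d)" by (simp add: A_def fls_nth_sum)
    also have "\<dots> = (\<Sum>i<nat (d - t0) + 1. cc i j $$ d)"
    proof (rule sum.mono_neutral_right)
      show "\<forall>i\<in>{..<I} - {..<nat (d - t0) + 1}. cc i j $$ d = 0"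
      proof
        fix i assume "i \<in> {..<I} - {..<nat (d - t0) + 1}"
        then have "d < t0 + int i" using that by auto
        then show "cc i j $$ d = 0" using ccv[of i j] unfolding vge_def by blast
      qed
    qed (use that in auto)
    also have "\<dots> = A (nat (d - t0) + 1) j $$ d" by (simp add: A_def fls_nth_sum)
    finally show ?thesis .
  qed
  define a where "a j = fls_shift (-t0) (fps_to_fls (Abs_fps (\<lambda>k. A (k + 1) j $$ (int k + t0))))" for j
  have a_nth: "a j $$ d = (if d < t0 then 0 else A (nat (d - t0) + 1) j $$ d)" for j d
    by (simp add: a_def)
  have a_close: "vge (t0 + int I) (a j - A I j)" for I j
    unfolding vge_def
  proof (intro allI impI)
    fix d assume d: "d < t0 + int I"
    show "(a j - A I j) $$ d = 0"
    proof (cases "d < t0")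
      case True then show ?thesis by (simp add: a_nth Anth_low)
    next
      case False
      then have "nat (d - t0) + 1 \<le> I" using d by linarith
      then show ?thesis using False Astab[of d I j] by (simp add: a_nth)
    qed
  qed
  have pick: "\<exists>I::nat. K \<le> t0 + int I" for K :: int
    by (rule exI[of _ "nat (K - t0)"]) linarith
  have lim1: "(\<lambda>n. tabs (a n)) \<longlonglongrightarrow> 0"
    unfolding LIMSEQ_iff
  proof (intro allI impI)
    fix r :: real assume r: "0 < r"
    obtain K :: nat where K: "2 powr (- real K) < r" using small_pow r by blast
    obtain I :: nat where I: "int K \<le> t0 + int I" using pick by blast
    have "norm (tabs (a j) - 0) < r" if "j \<ge> MM I" for j
    proof -
      have "vge (t0 + int I) (a j)" using a_close[of I j] Az[OF that] by simp
      then have "vge (int K) (a j)" using I by (rule vge_mono)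
      then have "tabs (a j) \<le> 2 powr (- real K)" by (simp add: vge_tabs)
      then show ?thesis using K tabs_nonneg[of "a j"] by simp
    qed
    then show "\<exists>no. \<forall>n\<ge>no. norm (tabs (a n) - 0) < r" by blast
  qed
  have lim2: "(\<lambda>N. supnorm (\<lambda>x. f x - (\<Sum>n<N. a n * g n x))) \<longlonglongrightarrow> 0"
    unfolding LIMSEQ_iff
  proof (intro allI impI)
    fix r :: real assume r: "0 < r"
    obtain K :: nat where K: "2 powr (- real K) < r" using small_pow r by blast
    obtain I :: nat where I: "int K \<le> t0 + int I" using pick by blast
    have "norm (supnorm (\<lambda>x. f x - (\<Sum>n<N. a n * g n x)) - 0) < r" if N: "N \<ge> MM I" for N
    proof -
      have bd: "\<forall>x\<in>Oring. tabs (f x - (\<Sum>n<N. a n * g n x)) \<le> 2 powr (- real K)"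
      proof
        fix x :: "'a fls" assume x: "x \<in> Oring"
        have s1: "(\<Sum>n<N. (A I n - a n) * g n x) = (\<Sum>n<N. A I n * g n x) - (\<Sum>n<N. a n * g n x)"
          by (simp add: left_diff_distrib sum_subtractf)
        have eq: "f x - (\<Sum>n<N. a n * g n x) = hs I x + (\<Sum>n<N. (A I n - a n) * g n x)"
          unfolding s1 using ident[of x I] regroup[OF N, of x] by simp
        have "vge (t0 + int I) (hs I x + (\<Sum>n<N. (A I n - a n) * g n x))"
        proof (intro vge_add vge_sum)
          show "vge (t0 + int I) (hs I x)" using inv[of I] x by blast
        next
          fix n
          have av: "vge (t0 + int I) (A I n - a n)" using vge_uminus[OF a_close[of I n]] by simp
          have gv: "vge 0 (g n x)" using g_O[OF x] by (simp add: Oring_vge)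
          show "vge (t0 + int I) ((A I n - a n) * g n x)"
            using vge_mult[OF av gv] by simp
        qed
        then have "vge (t0 + int I) (f x - (\<Sum>n<N. a n * g n x))" unfolding eq .
        then have "vge (int K) (f x - (\<Sum>n<N. a n * g n x))" using I by (rule vge_mono)
        then show "tabs (f x - (\<Sum>n<N. a n * g n x)) \<le> 2 powr (- real K)" by (simp add: vge_tabs)
      qed
      show ?thesis using sup_le[OF bd] sup_nonneg[OF bd] K by simp
    qed
    then show "\<exists>no. \<forall>N\<ge>no. norm (supnorm (\<lambda>x. f x - (\<Sum>n<N. a n * g n x)) - 0) < r" by blast
  qed
  show ?thesis using lim1 lim2 by blast
qed

theorem onb: "orthonormal_basis g"
  unfolding orthonormal_basis_def
proof (intro conjI allI impI)
  fix n show "CO (g n)" by (simp add: CO_def g_cont)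
next
  fix f :: "'a fls \<Rightarrow> 'a fls" assume f: "CO f"
  obtain a where a: "(\<lambda>n. tabs (a n)) \<longlonglongrightarrow> 0 \<and>
             (\<lambda>N. supnorm (\<lambda>x. f x - (\<Sum>n<N. a n * g n x))) \<longlonglongrightarrow> 0"
    using exist[OF f] by blast
  show "\<exists>!a. (\<lambda>n. tabs (a n)) \<longlonglongrightarrow> 0 \<and>
             (\<lambda>N. supnorm (\<lambda>x. f x - (\<Sum>n<N. a n * g n x))) \<longlonglongrightarrow> 0"
    by (rule ex1I[of _ a]) (use a uniq[OF f] in auto)
next
  fix f :: "'a fls \<Rightarrow> 'a fls" and a assume f: "CO f" and
    a: "(\<lambda>n. tabs (a n)) \<longlonglongrightarrow> 0 \<and> (\<lambda>N. supnorm (\<lambda>x. f x - (\<Sum>n<N. a n * g n x))) \<longlonglongrightarrow> 0"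
  then show "supnorm f = (SUP n. tabs (a n))" using norm_eq[OF f] by blast
qed

end


lemma Oring_prod: "(\<And>i. i \<in> A \<Longrightarrow> f i \<in> Oring) \<Longrightarrow> (\<Prod>i\<in>A. f i) \<in> (Oring :: 'a::{finite,field} fls set)"
proof (induction A rule: infinite_finite_induct)
  case (infinite A) then show ?case by (simp add: Oring_def)
next
  case empty then show ?case by (simp add: Oring_def)
next
  case (insert a A) then show ?case by (simp add: Oring_mult)
qed

lemma Oring_power: "x \<in> Oring \<Longrightarrow> x ^ k \<in> (Oring :: 'a::{finite,field} fls set)"
proof (induction k)
  case 0 then show ?case by (simp add: Oring_def)
next
  case (Suc k) then show ?case by (simp add: Oring_mult)
qed

lemma red_mult: "x \<in> Oring \<Longrightarrow> y \<in> Oring \<Longrightarrow> (x * y) $$ 0 = x $$ 0 * (y :: 'a::{finite,field} fls) $$ 0"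
  by (rule mult_nth_vge) (auto simp: Oring_vge)

lemma red_power: "x \<in> Oring \<Longrightarrow> (x ^ k) $$ 0 = ((x :: 'a::{finite,field} fls) $$ 0) ^ k"
  by (induction k) (auto simp: red_mult Oring_power)

lemma red_prod: "(\<And>i. i \<in> A \<Longrightarrow> f i \<in> Oring) \<Longrightarrow> (\<Prod>i\<in>A. f i) $$ 0 = (\<Prod>i\<in>A. (f i :: 'a::{finite,field} fls) $$ 0)"
proof (induction A rule: infinite_finite_induct)
  case (infinite A) then show ?case by simp
next
  case empty then show ?case by simp
next
  case (insert a A) then show ?case by (simp add: red_mult Oring_prod)
qed

lemma digit_family_onb:
  fixes E :: "nat \<Rightarrow> 'a::{finite,field} fls \<Rightarrow> 'a fls" and \<kappa> :: "nat \<Rightarrow> 'a"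
  assumes Ec: "\<And>n. continuous_on Oring (E n)"
    and EO: "\<And>n x. x \<in> Oring \<Longrightarrow> E n x \<in> Oring"
    and Ered: "\<And>n x. x \<in> Oring \<Longrightarrow> E n x $$ 0 = \<kappa> n * x $$ int n"
    and knz: "\<And>n. \<kappa> n \<noteq> 0"
  shows "orthonormal_basis (\<lambda>j x. (\<Prod>n\<le>j. E n x ^ digit CARD('a) j n) ^ (CARD('a) ^ m))"
proof -
  let ?q = "CARD('a)"
  define C where "C j = (\<Prod>n\<le>j. \<kappa> n ^ digit ?q j n)" for j
  interpret rb "\<lambda>j x. (\<Prod>n\<le>j. E n x ^ digit CARD('a) j n) ^ (CARD('a) ^ m)" C
  proof
    fix j
    show "continuous_on Oring (\<lambda>x. (\<Prod>n\<le>j. E n x ^ digit CARD('a) j n) ^ (CARD('a) ^ m))"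
      by (intro cont_power cont_prod Ec)
  next
    fix j and x :: "'a fls" assume "x \<in> Oring"
    then show "(\<Prod>n\<le>j. E n x ^ digit CARD('a) j n) ^ (CARD('a) ^ m) \<in> Oring"
      by (intro Oring_power Oring_prod EO)
  next
    fix j show "C j \<noteq> 0" using knz by (simp add: C_def)
  next
    fix j and x :: "'a fls" assume x: "x \<in> Oring"
    have "((\<Prod>n\<le>j. E n x ^ digit CARD('a) j n) ^ (CARD('a) ^ m)) $$ 0 =
          ((\<Prod>n\<le>j. E n x ^ digit CARD('a) j n) $$ 0) ^ (CARD('a) ^ m)"
      using x by (intro red_power Oring_prod Oring_power EO)
    also have "(\<Prod>n\<le>j. E n x ^ digit CARD('a) j n) $$ 0 = (\<Prod>n\<le>j. (E n x ^ digit CARD('a) j n) $$ 0)"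
      using x by (intro red_prod Oring_power EO)
    also have "\<dots> = (\<Prod>n\<le>j. (\<kappa> n * x $$ int n) ^ digit CARD('a) j n)"
      using x by (intro prod.cong refl) (simp add: red_power EO Ered)
    also have "\<dots> = C j * dmono j x"
      by (simp add: C_def dmono_def power_mult_distrib prod.distrib)
    finally show "((\<Prod>n\<le>j. E n x ^ digit CARD('a) j n) ^ (CARD('a) ^ m)) $$ 0 = C j * dmono j x"
      by (simp add: fermat_pow)
  qed
  show ?thesis by (rule onb)
qed

lemma hasse_Oring: "hasse n x \<in> Oring"
  by (simp add: hasse_def Oring_def fls_subdegree_fls_to_fps_gt0)

lemma hasse_red: "hasse n x $$ 0 = x $$ int n"
  by (simp add: hasse_def)

lemma hasse_cont: "continuous_on Oring (hasse n :: 'a::{finite,field} fls \<Rightarrow> 'a fls)"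
  unfolding cont_vge_iff
proof (intro ballI allI)
  fix x :: "'a fls" and t assume "x \<in> Oring"
  have "vge t (hasse n x' - hasse n x)" if "vge (t + int n) (x' - x)" for x'
    unfolding vge_def
  proof (intro allI impI)
    fix i assume i: "i < t"
    show "(hasse n x' - hasse n x) $$ i = 0"
    proof (cases "i < 0")
      case True then show ?thesis by (simp add: hasse_def)
    next
      case False
      have "(x' - x) $$ (i + int n) = 0" using that i unfolding vge_def by simp
      then show ?thesis using False by (simp add: hasse_def algebra_simps)
    qed
  qed
  then show "\<exists>k. \<forall>x'\<in>Oring. vge k (x' - x) \<longrightarrow> vge t (hasse n x' - hasse n x)" by blast
qed

lemma Dfun_onb: "orthonormal_basis (\<lambda>j x. (Dfun j x :: 'a::{finite,field} fls) ^ (CARD('a) ^ m))"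
proof -
  have "orthonormal_basis (\<lambda>j (x :: 'a fls). (\<Prod>n\<le>j. hasse n x ^ digit CARD('a) j n) ^ (CARD('a) ^ m))"
    by (rule digit_family_onb[where E=hasse and \<kappa>="\<lambda>_. 1"]) (auto simp: hasse_cont hasse_Oring hasse_red)
  then show ?thesis by (simp add: Dfun_def)
qed


definition shc :: "nat \<Rightarrow> 'a::{finite,field} \<Rightarrow> 'a fls" where
  "shc n c = fls_shift (- int n) (fls_const c)"

lemma shc_nth: "shc n c $$ i = (if i = int n then c else 0)"
  by (simp add: shc_def)

lemma polys_lt_0: "polys_lt 0 = {0}"
proof (rule set_eqI)
  fix p :: "'a fls"
  show "p \<in> polys_lt 0 \<longleftrightarrow> p \<in> {0}"
  proof
    assume p: "p \<in> polys_lt 0"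
    have "p = 0"
    proof (rule fls_eqI)
      fix i
      have "p $$ i \<noteq> 0 \<longrightarrow> 0 \<le> i \<and> i < int 0" using p unfolding polys_lt_def by blast
      then show "p $$ i = 0 $$ i" by auto
    qed
    then show "p \<in> {0}" by simp
  qed (simp add: polys_lt_def)
qed

lemma polys_lt_zero[simp]: "0 \<in> polys_lt n"
  by (simp add: polys_lt_def)

lemma polys_lt_nth: "m \<in> polys_lt n \<Longrightarrow> m $$ i \<noteq> 0 \<Longrightarrow> 0 \<le> i \<and> i < int n"
  unfolding polys_lt_def by blast

lemma polys_lt_Oring:
  assumes m: "m \<in> polys_lt n" shows "m \<in> Oring"
  unfolding Oring_vge vge_def
proof (intro allI impI)
  fix i :: int assume i: "i < 0"
  show "m $$ i = 0"
  proof (rule ccontr)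
    assume "m $$ i \<noteq> 0" then show False using polys_lt_nth[OF m] i by fastforce
  qed
qed

lemma polys_lt_diff:
  assumes "m \<in> polys_lt n" "m' \<in> polys_lt n" shows "m - m' \<in> polys_lt n"
  unfolding polys_lt_def mem_Collect_eq
proof (intro allI impI)
  fix i assume "(m - m') $$ i \<noteq> 0"
  then have "m $$ i \<noteq> 0 \<or> m' $$ i \<noteq> 0" by auto
  then show "0 \<le> i \<and> i < int n" using assms unfolding polys_lt_def by blast
qed

lemma polys_lt_add:
  assumes "m \<in> polys_lt n" "m' \<in> polys_lt n" shows "m + m' \<in> polys_lt n"
  unfolding polys_lt_def mem_Collect_eq
proof (intro allI impI)
  fix i assume "(m + m') $$ i \<noteq> 0"
  then have "m $$ i \<noteq> 0 \<or> m' $$ i \<noteq> 0" by auto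
  then show "0 \<le> i \<and> i < int n" using assms unfolding polys_lt_def by blast
qed

lemma polys_lt_subdeg:
  assumes "m \<in> polys_lt n" "m \<noteq> 0"
  shows "0 \<le> fls_subdegree m" "fls_subdegree m < int n"
  using assms nth_fls_subdegree_nonzero[of m] unfolding polys_lt_def by blast+

lemma polys_lt_Suc:
  "polys_lt (Suc n) = (\<lambda>(m, c). m + shc n c) ` (polys_lt n \<times> (UNIV :: 'a::{finite,field} set))"
proof
  show "polys_lt (Suc n) \<subseteq> (\<lambda>(m, c). m + shc n c) ` (polys_lt n \<times> (UNIV :: 'a set))"
  proof
    fix p :: "'a fls" assume p: "p \<in> polys_lt (Suc n)"
    define m where "m = p - shc n (p $$ int n)"
    have "m \<in> polys_lt n" using p unfolding polys_lt_def m_def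
      by (auto simp: shc_nth split: if_splits)
    moreover have "p = m + shc n (p $$ int n)" by (simp add: m_def)
    ultimately show "p \<in> (\<lambda>(m, c). m + shc n c) ` (polys_lt n \<times> UNIV)" by force
  qed
  show "(\<lambda>(m, c). m + shc n c) ` (polys_lt n \<times> (UNIV :: 'a set)) \<subseteq> polys_lt (Suc n)"
    unfolding polys_lt_def by (auto simp: shc_nth split: if_splits)
qed

lemma polys_lt_inj: "inj_on (\<lambda>(m, c). m + shc n c) (polys_lt n \<times> (UNIV :: 'a::{finite,field} set))"
proof (rule inj_onI, clarify)
  fix m c m' c'
  assume m: "m \<in> polys_lt n" and m': "m' \<in> polys_lt n" and eq: "m + shc n c = m' + shc n (c' :: 'a)"
  have mn: "m $$ int n = 0" using polys_lt_nth[OF m, of "int n"] by auto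
  have mn': "m' $$ int n = 0" using polys_lt_nth[OF m', of "int n"] by auto
  have e1: "(m + shc n c) $$ int n = c" using mn by (simp add: shc_nth)
  have e2: "(m' + shc n c') $$ int n = c'" using mn' by (simp add: shc_nth)
  have cc: "c = c'" using e1 e2 eq by metis
  then show "m = m' \<and> c = c'" using eq by simp
qed

lemma finite_polys_lt: "finite (polys_lt n :: 'a::{finite,field} fls set)"
  by (induction n) (simp_all add: polys_lt_0 polys_lt_Suc)

definition wv :: "'a::zero fls \<Rightarrow> int" where
  "wv m = (if m = 0 then 0 else fls_subdegree m)"

definition Wsum :: "nat \<Rightarrow> 'a::{finite,field} itself \<Rightarrow> int" where
  "Wsum n T = (\<Sum>m\<in>(polys_lt n :: 'a fls set). wv m)"

lemma wv_shift:
  assumes m: "m \<in> polys_lt n"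
  shows "wv (m + shc n (c::'a::{finite,field})) = (if m = 0 then (if c = 0 then 0 else int n) else fls_subdegree m)"
proof (cases "m = 0")
  case True
  show ?thesis
  proof (cases "c = 0")
    case True then show ?thesis using \<open>m = 0\<close> by (simp add: wv_def shc_def)
  next
    case False
    have "shc n c $$ int n \<noteq> 0" using False by (simp add: shc_nth)
    then have nz: "shc n c \<noteq> 0" by auto
    have "fls_subdegree (shc n c) = int n"
      using False by (intro fls_subdegree_eqI) (auto simp: shc_nth)
    then show ?thesis using True False nz by (simp add: wv_def)
  qed
next
  case False
  have lt: "fls_subdegree m < int n" using polys_lt_subdeg[OF m False] by simp
  have c0: "(m + shc n c) $$ fls_subdegree m = m $$ fls_subdegree m" using lt by (simp add: shc_nth)
  have c1: "(m + shc n c) $$ fls_subdegree m \<noteq> 0" unfolding c0 using False by simp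
  have nz: "m + shc n c \<noteq> 0"
  proof
    assume h: "m + shc n c = 0"
    have "(m + shc n c) $$ fls_subdegree m = 0" unfolding h by simp
    then show False using c1 by blast
  qed
  have "fls_subdegree (m + shc n c) = fls_subdegree m"
    using c1 lt by (intro fls_subdegree_eqI) (auto simp: shc_nth)
  then show ?thesis using False nz by (simp add: wv_def)
qed

lemma Wsum_Suc: "Wsum (Suc n) TYPE('a::{finite,field}) = int CARD('a) * Wsum n TYPE('a) + (int CARD('a) - 1) * int n"
proof -
  let ?q = "CARD('a)"
  let ?P = "polys_lt n :: 'a fls set"
  have "Wsum (Suc n) TYPE('a) = (\<Sum>p\<in>(\<lambda>(m, c). m + shc n c) ` (?P \<times> (UNIV :: 'a set)). wv p)"
    by (simp add: Wsum_def polys_lt_Suc)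
  also have "\<dots> = (\<Sum>(m, c)\<in>?P \<times> (UNIV :: 'a set). wv (m + shc n c))"
    by (subst sum.reindex[OF polys_lt_inj]) (simp add: case_prod_beta comp_def)
  also have "\<dots> = (\<Sum>m\<in>?P. \<Sum>c\<in>(UNIV :: 'a set). wv (m + shc n c))"
    by (rule sum.cartesian_product[symmetric])
  also have "\<dots> = (\<Sum>m\<in>?P. if m = 0 then (int ?q - 1) * int n else int ?q * wv m)"
  proof (rule sum.cong[OF refl])
    fix m assume m: "m \<in> ?P"
    show "(\<Sum>c\<in>(UNIV :: 'a set). wv (m + shc n c)) = (if m = 0 then (int ?q - 1) * int n else int ?q * wv m)"
    proof (cases "m = 0")
      case True
      have "(\<Sum>c\<in>(UNIV :: 'a set). wv (m + shc n c)) = (\<Sum>c\<in>(UNIV :: 'a set). if c = 0 then 0 else int n)"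
        using wv_shift[OF m] True by simp
      also have "\<dots> = (\<Sum>c\<in>UNIV - {0::'a}. int n)"
        by (subst sum.mono_neutral_right[of UNIV "UNIV - {0::'a}"]) auto
      also have "\<dots> = (int ?q - 1) * int n" by (simp add: card_Diff_singleton of_nat_diff)
      finally show ?thesis using True by simp
    next
      case False
      then show ?thesis using wv_shift[OF m] by (simp add: wv_def)
    qed
  qed
  also have "\<dots> = (int ?q - 1) * int n + (\<Sum>m\<in>?P - {0}. int ?q * wv m)"
    by (subst sum.remove[of _ 0]) (auto simp: finite_polys_lt intro!: sum.cong)
  also have "(\<Sum>m\<in>?P - {0}. int ?q * wv m) = int ?q * Wsum n TYPE('a)"
    unfolding Wsum_def sum_distrib_left
    by (subst (2) sum.remove[of _ 0]) (auto simp: finite_polys_lt wv_def)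
  finally show ?thesis by simp
qed

definition Nn :: "nat \<Rightarrow> 'a::{finite,field} itself \<Rightarrow> int" where
  "Nn n T = (\<Sum>i\<in>{1..n}. int CARD('a) ^ (n - i))"

lemma Nn_Suc: "Nn (Suc n) TYPE('a::{finite,field}) = int CARD('a) * Nn n TYPE('a) + 1"
proof -
  let ?q = "int CARD('a)"
  have "Nn (Suc n) TYPE('a) = (\<Sum>i\<in>insert (Suc n) {1..n}. ?q ^ (Suc n - i))"
    unfolding Nn_def by (simp add: atLeastAtMostSuc_conv)
  also have "\<dots> = 1 + (\<Sum>i\<in>{1..n}. ?q ^ (Suc n - i))" by simp
  also have "(\<Sum>i\<in>{1..n}. ?q ^ (Suc n - i)) = ?q * Nn n TYPE('a)"
    unfolding Nn_def sum_distrib_left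
    by (rule sum.cong[OF refl]) (simp add: Suc_diff_le)
  finally show ?thesis by simp
qed

lemma W_N: "int n + Wsum n TYPE('a::{finite,field}) = Nn n TYPE('a)"
proof (induction n)
  case 0 then show ?case by (simp add: Wsum_def Nn_def polys_lt_0 wv_def)
next
  case (Suc n)
  have "int (Suc n) + Wsum (Suc n) TYPE('a) = int CARD('a) * (int n + Wsum n TYPE('a)) + 1"
    by (simp add: Wsum_Suc algebra_simps)
  then show ?case by (simp only: Suc.IH Nn_Suc)
qed


lemma prod_vlc:
  fixes f :: "'b \<Rightarrow> 'a::{finite,field} fls"
  assumes "finite A" "\<forall>i\<in>A. f i \<noteq> 0"
  shows "(\<Prod>i\<in>A. f i) \<noteq> 0 \<and> fls_subdegree (\<Prod>i\<in>A. f i) = (\<Sum>i\<in>A. fls_subdegree (f i)) \<and>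
         (\<Prod>i\<in>A. f i) $$ fls_subdegree (\<Prod>i\<in>A. f i) = (\<Prod>i\<in>A. f i $$ fls_subdegree (f i))"
  using assms
proof (induction A rule: finite_induct)
  case empty then show ?case by simp
next
  case (insert a A)
  then have fa: "f a \<noteq> 0" and IH: "(\<Prod>i\<in>A. f i) \<noteq> 0" "fls_subdegree (\<Prod>i\<in>A. f i) = (\<Sum>i\<in>A. fls_subdegree (f i))"
    "(\<Prod>i\<in>A. f i) $$ fls_subdegree (\<Prod>i\<in>A. f i) = (\<Prod>i\<in>A. f i $$ fls_subdegree (f i))" by auto
  have "f a * (\<Prod>i\<in>A. f i) \<noteq> 0" using fa IH(1) by simp
  moreover have "fls_subdegree (f a * (\<Prod>i\<in>A. f i)) = fls_subdegree (f a) + fls_subdegree (\<Prod>i\<in>A. f i)"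
    using fa IH(1) by simp
  moreover have "(f a * (\<Prod>i\<in>A. f i)) $$ (fls_subdegree (f a) + fls_subdegree (\<Prod>i\<in>A. f i)) =
      f a $$ fls_subdegree (f a) * (\<Prod>i\<in>A. f i) $$ fls_subdegree (\<Prod>i\<in>A. f i)"
    by (rule fls_times_base)
  ultimately show ?case using insert IH by simp
qed

lemma brk_props:
  assumes "1 \<le> i"
  shows "brk i \<noteq> (0 :: 'a::{finite,field} fls) \<and> fls_subdegree (brk i :: 'a fls) = 1"
proof -
  have q2: "2 \<le> CARD('a) ^ i"
    using card_ge2[where 'a='a] assms
    by (metis dual_order.trans le_add_diff_inverse one_le_numeral power_increasing power_one_right
        self_le_power zero_less_one le_numeral_extra(1))
  have "int (CARD('a) ^ i) \<ge> 2" using q2 by linarith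
  then have q2i: "int CARD('a) ^ i \<ge> 2" by simp
  have c1: "(brk i :: 'a fls) $$ 1 = -1" using q2i by (simp add: brk_def)
  then have nz: "brk i \<noteq> (0 :: 'a fls)" by auto
  have "fls_subdegree (brk i :: 'a fls) = 1"
  proof (rule fls_subdegree_eqI)
    show "(brk i :: 'a fls) $$ 1 \<noteq> 0" using c1 by simp
    fix k :: int assume "k < 1"
    then show "(brk i :: 'a fls) $$ k = 0" using q2i by (auto simp: brk_def)
  qed
  then show ?thesis using nz by simp
qed

lemma Fcar_props:
  "Fcar n \<noteq> (0 :: 'a::{finite,field} fls) \<and> fls_subdegree (Fcar n :: 'a fls) = Nn n TYPE('a)"
proof -
  have nz: "\<forall>i\<in>{1..n}. (brk i :: 'a fls) ^ (CARD('a) ^ (n - i)) \<noteq> 0"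
  proof
    fix i assume "i \<in> {1..n}"
    then have "(brk i :: 'a fls) \<noteq> 0" using brk_props by auto
    then show "(brk i :: 'a fls) ^ (CARD('a) ^ (n - i)) \<noteq> 0" by simp
  qed
  have P: "(\<Prod>i\<in>{1..n}. (brk i :: 'a fls) ^ (CARD('a) ^ (n - i))) \<noteq> 0 \<and>
      fls_subdegree (\<Prod>i\<in>{1..n}. (brk i :: 'a fls) ^ (CARD('a) ^ (n - i))) =
        (\<Sum>i\<in>{1..n}. fls_subdegree ((brk i :: 'a fls) ^ (CARD('a) ^ (n - i))))"
    using prod_vlc[OF _ nz] by simp
  have "(\<Sum>i\<in>{1..n}. fls_subdegree ((brk i :: 'a fls) ^ (CARD('a) ^ (n - i)))) = Nn n TYPE('a)"
    unfolding Nn_def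
  proof (rule sum.cong[OF refl])
    fix i assume "i \<in> {1..n}"
    then have "fls_subdegree (brk i :: 'a fls) = 1" using brk_props by auto
    then show "fls_subdegree ((brk i :: 'a fls) ^ (CARD('a) ^ (n - i))) = int CARD('a) ^ (n - i)"
      by (simp add: fls_subdegree_pow)
  qed
  then show ?thesis using P by (simp add: Fcar_def)
qed


definition trn :: "nat \<Rightarrow> 'a::{finite,field} fls \<Rightarrow> 'a fls" where
  "trn n x = fps_to_fls (Abs_fps (\<lambda>k. if k < n then x $$ int k else 0))"

definition syn :: "nat \<Rightarrow> 'a::{finite,field} fls \<Rightarrow> 'a fls" where
  "syn n x = fps_to_fls (Abs_fps (\<lambda>k. x $$ (int k + int n)))"

lemma trn_polys: "trn n x \<in> polys_lt n"
  unfolding polys_lt_def trn_def by (auto split: if_splits)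

lemma syn_Oring: "syn n x \<in> Oring"
  by (simp add: syn_def Oring_def fls_subdegree_fls_to_fps_gt0)

lemma syn_red: "syn n x $$ 0 = x $$ int n"
  by (simp add: syn_def)

lemma x_decomp: "x \<in> Oring \<Longrightarrow> x = trn n x + fls_shift (- int n) (syn n x)"
proof (rule fls_eqI)
  fix i assume x: "x \<in> Oring"
  show "x $$ i = (trn n x + fls_shift (- int n) (syn n x)) $$ i"
  proof (cases "i < 0")
    case True
    then show ?thesis using x by (simp add: Oring_vge vge_def trn_def syn_def)
  next
    case False
    then show ?thesis by (auto simp: trn_def syn_def)
  qed
qed

lemma shift_vge: "vge (int n) (fls_shift (- int n) y)" if "y \<in> Oring"
  using that unfolding Oring_vge vge_def by simp

lemma factor_props:
  assumes m: "m \<in> polys_lt n" "m \<noteq> 0" and z: "vge (int n) z"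
  shows "z - m \<noteq> 0 \<and> fls_subdegree (z - m) = fls_subdegree m \<and>
         (z - m) $$ fls_subdegree (z - m) = - (m $$ fls_subdegree m)"
proof -
  have lt: "fls_subdegree m < int n" using polys_lt_subdeg[OF m] by simp
  have co: "(z - m) $$ i = - (m $$ i)" if "i < int n" for i
    using z that unfolding vge_def by simp
  have c0: "(z - m) $$ fls_subdegree m \<noteq> 0" using co[OF lt] m(2) by simp
  then have nz: "z - m \<noteq> 0" by (metis fls_zero_nth)
  have sd: "fls_subdegree (z - m) = fls_subdegree m"
  proof (rule fls_subdegree_eqI[OF c0])
    fix k assume "k < fls_subdegree m"
    then show "(z - m) $$ k = 0" using co[of k] lt by simp
  qed
  show ?thesis using nz sd co[OF lt] by simp
qed

definition Cst :: "nat \<Rightarrow> 'a::{finite,field}" where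
  "Cst n = (\<Prod>m\<in>(polys_lt n :: 'a fls set) - {0}. - (m $$ fls_subdegree m))"

lemma Wsum_alt: "Wsum n TYPE('a::{finite,field}) = (\<Sum>m\<in>(polys_lt n :: 'a fls set) - {0}. fls_subdegree m)"
proof -
  have "Wsum n TYPE('a) = wv (0::'a fls) + (\<Sum>m\<in>(polys_lt n :: 'a fls set) - {0}. wv m)"
    unfolding Wsum_def by (rule sum.remove) (simp_all add: finite_polys_lt)
  also have "\<dots> = (\<Sum>m\<in>(polys_lt n :: 'a fls set) - {0}. fls_subdegree m)"
    by (simp add: wv_def)
  finally show ?thesis .
qed

lemma R_props:
  fixes z :: "'a::{finite,field} fls"
  assumes z: "vge (int n) z"
  defines "R \<equiv> (\<Prod>m\<in>(polys_lt n :: 'a fls set) - {0}. z - m)"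
  shows "R \<noteq> 0 \<and> fls_subdegree R = Wsum n TYPE('a) \<and> R $$ fls_subdegree R = Cst n"
proof -
  have fin: "finite ((polys_lt n :: 'a fls set) - {0})" by (simp add: finite_polys_lt)
  have nz: "\<forall>m\<in>(polys_lt n :: 'a fls set) - {0}. z - m \<noteq> 0" using factor_props[OF _ _ z] by blast
  note P = prod_vlc[OF fin nz]
  have e1: "(\<Sum>m\<in>(polys_lt n :: 'a fls set) - {0}. fls_subdegree (z - m)) = Wsum n TYPE('a)"
    unfolding Wsum_alt using factor_props[OF _ _ z] by (intro sum.cong) auto
  have e2: "(\<Prod>m\<in>(polys_lt n :: 'a fls set) - {0}. (z - m) $$ fls_subdegree (z - m)) = Cst n"
    unfolding Cst_def
  proof (rule prod.cong[OF refl])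
    fix m assume "m \<in> (polys_lt n :: 'a fls set) - {0}"
    then show "(z - m) $$ fls_subdegree (z - m) = - (m $$ fls_subdegree m)"
      using factor_props[OF _ _ z, of m] by blast
  qed
  show ?thesis using P unfolding R_def e1 e2 .
qed

lemma ecar_decomp:
  fixes n :: nat and x :: "'a::{finite,field} fls"
  assumes x: "x \<in> Oring"
  defines "z \<equiv> fls_shift (- int n) (syn n x)"
  shows "ecar n x = z * (\<Prod>m\<in>(polys_lt n :: 'a fls set) - {0}. z - m)"
proof -
  define a where "a = trn n x"
  have aP: "a \<in> polys_lt n" by (simp add: a_def trn_polys)
  have xa: "x = a + z" using x_decomp[OF x, of n] by (simp add: a_def z_def)
  have bij: "bij_betw (\<lambda>m. m - a) (polys_lt n) (polys_lt n)"
    by (rule bij_betwI[where g="\<lambda>m. m + a"]) (auto simp: polys_lt_diff polys_lt_add aP)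
  have "ecar n x = (\<Prod>m\<in>polys_lt n. z - (m - a))"
    unfolding ecar_def xa by (intro prod.cong) auto
  also have "\<dots> = (\<Prod>m\<in>polys_lt n. z - m)"
    using prod.reindex_bij_betw[OF bij, of "\<lambda>m. z - m"] by simp
  also have "\<dots> = (z - 0) * (\<Prod>m\<in>polys_lt n - {0}. z - m)"
    by (rule prod.remove) (simp_all add: finite_polys_lt)
  finally show ?thesis by simp
qed


definition kap :: "nat \<Rightarrow> 'a::{finite,field}" where
  "kap n = (if n = 0 then 1 else Cst n / (Fcar n $$ fls_subdegree (Fcar n :: 'a fls)))"

lemma kap_nz: "kap n \<noteq> (0::'a::{finite,field})"
proof (cases "n = 0")
  case True then show ?thesis by (simp add: kap_def)
next
  case False
  have "Cst n \<noteq> (0::'a)" unfolding Cst_def by (simp add: prod_zero_iff finite_polys_lt)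
  moreover have "(Fcar n :: 'a fls) $$ fls_subdegree (Fcar n :: 'a fls) \<noteq> 0"
    using Fcar_props[of n, where 'a='a] nth_fls_subdegree_nonzero by blast
  ultimately show ?thesis using False by (simp add: kap_def)
qed

lemma Ecar_cont: "continuous_on Oring (Ecar n :: 'a::{finite,field} fls \<Rightarrow> 'a fls)"
proof (cases "n = 0")
  case True
  then have "Ecar n = (\<lambda>x::'a fls. x)" by (simp add: Ecar_def fun_eq_iff)
  then show ?thesis by (simp add: cont_id)
next
  case False
  then have "Ecar n = (\<lambda>x::'a fls. (\<Prod>m\<in>polys_lt n. x - m) * inverse (Fcar n))"
    by (simp add: Ecar_def ecar_def fun_eq_iff divide_inverse)
  moreover have "continuous_on Oring (\<lambda>x::'a fls. (\<Prod>m\<in>polys_lt n. x - m) * inverse (Fcar n))"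
    by (intro cont_mult cont_prod cont_diff cont_id cont_const)
  ultimately show ?thesis by simp
qed

lemma Ecar_main:
  fixes x :: "'a::{finite,field} fls"
  assumes x: "x \<in> Oring"
  shows "Ecar n x \<in> Oring \<and> Ecar n x $$ 0 = kap n * x $$ int n"
proof (cases "n = 0")
  case True
  then show ?thesis using x by (simp add: Ecar_def kap_def)
next
  case n0: False
  define y where "y = syn n x"
  define z where "z = fls_shift (- int n) y"
  define R where "R = (\<Prod>m\<in>(polys_lt n :: 'a fls set) - {0}. z - m)"
  define F where "F = (Fcar n :: 'a fls)"
  have yO: "y \<in> Oring" by (simp add: y_def syn_Oring)
  have zv: "vge (int n) z" unfolding z_def using shift_vge[OF yO] .
  have RP: "R \<noteq> 0 \<and> fls_subdegree R = Wsum n TYPE('a) \<and> R $$ fls_subdegree R = Cst n"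
    unfolding R_def by (rule R_props[OF zv])
  have FP: "F \<noteq> 0" "fls_subdegree F = Nn n TYPE('a)" using Fcar_props[of n, where 'a='a] by (auto simp: F_def)
  have e: "ecar n x = z * R" unfolding R_def z_def y_def by (rule ecar_decomp[OF x])
  have E: "Ecar n x = z * R / F" using n0 e by (simp add: Ecar_def F_def)
  have y0: "y $$ 0 = x $$ int n" by (simp add: y_def syn_red)
  show ?thesis
  proof (cases "y = 0")
    case True
    then have "Ecar n x = 0" using E by (simp add: z_def)
    then show ?thesis using True y0 by simp
  next
    case False
    have znz: "z \<noteq> 0" using False by (simp add: z_def fls_shift_eq0_iff)
    have vz: "fls_subdegree z = fls_subdegree y + int n" using False by (simp add: z_def)
    have lz: "z $$ fls_subdegree z = y $$ fls_subdegree y" using vz by (simp add: z_def)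
    define Ev where "Ev = Ecar n x"
    have EF: "Ev * F = z * R" using E FP(1) by (simp add: Ev_def)
    have zR: "z * R \<noteq> 0" using znz RP by simp
    then have Enz: "Ev \<noteq> 0" using EF by auto
    have "fls_subdegree Ev + fls_subdegree F = fls_subdegree z + fls_subdegree R"
      using arg_cong[OF EF, of fls_subdegree] Enz FP(1) znz RP by simp
    then have vE: "fls_subdegree Ev = fls_subdegree y"
      using vz RP FP(2) W_N[of n, where 'a='a] by linarith
    have sumeq: "fls_subdegree Ev + fls_subdegree F = fls_subdegree z + fls_subdegree R"
      by fact
    have "Ev $$ fls_subdegree Ev * F $$ fls_subdegree F = (Ev * F) $$ (fls_subdegree Ev + fls_subdegree F)"
      by (rule fls_times_base[symmetric])
    also have "\<dots> = (z * R) $$ (fls_subdegree z + fls_subdegree R)" unfolding EF sumeq ..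
    also have "\<dots> = z $$ fls_subdegree z * R $$ fls_subdegree R" by (rule fls_times_base)
    also have "\<dots> = y $$ fls_subdegree y * Cst n"
    proof -
      have rc: "R $$ fls_subdegree R = Cst n" using RP by blast
      show ?thesis unfolding lz rc ..
    qed
    finally have lc: "Ev $$ fls_subdegree Ev * F $$ fls_subdegree F = y $$ fls_subdegree y * Cst n" .
    have ysd: "0 \<le> fls_subdegree y" using yO by (simp add: Oring_def)
    have EO: "Ev \<in> Oring" using vE ysd by (simp add: Oring_def)
    have lF: "F $$ fls_subdegree F \<noteq> 0" using FP(1) by simp
    have "Ev $$ 0 = kap n * y $$ 0"
    proof (cases "fls_subdegree y = 0")
      case True
      then have "Ev $$ 0 = y $$ 0 * Cst n / F $$ fls_subdegree F"
        using lc vE lF by (simp add: field_simps)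
      then show ?thesis using n0 by (simp add: kap_def F_def)
    next
      case False
      then have "0 < fls_subdegree y" using ysd by simp
      then show ?thesis using vE by simp
    qed
    then show ?thesis using EO y0 by (simp add: Ev_def)
  qed
qed

lemma Gfun_onb: "orthonormal_basis (\<lambda>j x. (Gfun j x :: 'a::{finite,field} fls) ^ (CARD('a) ^ m))"
proof -
  have "orthonormal_basis (\<lambda>j (x :: 'a fls). (\<Prod>n\<le>j. Ecar n x ^ digit CARD('a) j n) ^ (CARD('a) ^ m))"
    by (rule digit_family_onb[where E=Ecar and \<kappa>=kap]) (auto simp: Ecar_cont Ecar_main kap_nz)
  then show ?thesis by (simp add: Gfun_def)
qed

theorem corollary5:
  fixes m :: nat
  shows "orthonormal_basis (\<lambda>j x. (Gfun j x :: 'a::{finite,field} fls) ^ (CARD('a) ^ m)) \<and>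
         orthonormal_basis (\<lambda>j x. (Dfun j x :: 'a fls) ^ (CARD('a) ^ m))"
  using Gfun_onb Dfun_onb by blast


end
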